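(* Let $(X,\oplus,\odot,d)$ be any one of the spaces listed in the context, $\|x\|_{\mathcal F}=d(\tilde0,x)$. (i) If $A:X\to\mathbb{R}$ is linear and continuous at $\tilde0$, then $|A(x)|\le|||A|||_{\mathcal F}\|x\|_{\mathcal F}$ for all $x\in X$, and $|||A|||_{\mathcal F}=\sup\{|A(x)|:x\in X,\|x\|_{\mathcal F}\le1\}$. (ii) If $A:X\to X$ is linear and continuous at $\tilde0$, then $\|A(x)\|_{\mathcal F}\le|||A|||_{\mathcal F}\|x\|_{\mathcal F}$ for all $x\in X$, and $|||A|||_{\mathcal F}=\sup\{\|A(x)\|_{\mathcal F}:x\in X,\|x\|_{\mathcal F}\le1\}$.
   Context: Fuzzy numbers $\mathbb{R}_{\mathcal F}$: functions $u:\mathbb{R}\to[0,1]$ that are normal, fuzzy convex, upper semicontinuous, with compact support closure; level sets $[u]^r=[u_-(r),u_+(r)]$; $[u\oplus v]^r=[u]^r+[v]^r$, $[\lambda\odot u]^r=\lambda[u]^r$, $\tilde0=\chi_{\{0\}}$; $D(u,v)=\sup_{r\in[0,1]}\max\{|u_-(r)-v_-(r)|,|u_+(r)-v_+(r)|\}$. The admissible spaces $(X,\oplus,\odot,d)$ (operations pointwise/componentwise): $(\mathbb{R}_{\mathcal F},D)$; $C([a,b];\mathbb{R}_{\mathcal F})$ with sup-metric $D^*$; $L^p([a,b];\mathbb{R}_{\mathcal F})$ ($1\le p<\infty$) with $D_p(f,g)=(\int_a^bD(f,g)^p)^{1/p}$; $C^p([a,b];\mathbb{R}_{\mathcal F})$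 with $D_p^*(f,g)=\sum_{i=0}^pD^*(f^{(i)},g^{(i)})$; $l^p_{\mathbb{R}_{\mathcal F}}$ with $\rho_p(x,y)=(\sum_nD(x_n,y_n)^p)^{1/p}$; $m_{\mathbb{R}_{\mathcal F}}$, $c_{\mathbb{R}_{\mathcal F}}$, $c^{\tilde0}_{\mathbb{R}_{\mathcal F}}$ (bounded, convergent, null sequences) with $\mu(x,y)=\sup_nD(x_n,y_n)$; finite Cartesian products with max metric. Linear: for $A:X\to\mathbb{R}$, $A(x\oplus y)=A(x)+A(y)$, $A(\lambda\odot x)=\lambda A(x)$; for $A:X\to X$, $A(x\oplus y)=A(x)\oplus A(y)$, $A(\lambda\odot x)=\lambda\odot A(x)$ ($\lambda\in\mathbb{R}$). For such $A$ continuous at $\tilde0$, $\mathcal M_A=\{M>0:|A(x)|\le M\|x\|_{\mathcal F}\ \forall x\}$ (resp. $\{M>0:\|A(x)\|_{\mathcal F}\le M\|x\|_{\mathcal F}\ \forall x\}$) and $|||A|||_{\mathcal F}=\inf\mathcal M_A$. *)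

theory Defs
  imports "HOL-Analysis.Analysis"
begin

definition fuzzy_convex :: "(real \<Rightarrow> real) \<Rightarrow> bool" where
  "fuzzy_convex u \<longleftrightarrow>
     (\<forall>x y t. 0 \<le> t \<and> t \<le> 1 \<longrightarrow> min (u x) (u y) \<le> u (t * x + (1 - t) * y))"

definition usc_fun :: "(real \<Rightarrow> real) \<Rightarrow> bool" where
  "usc_fun u \<longleftrightarrow>
     (\<forall>x e. e > 0 \<longrightarrow> (\<exists>\<delta>>0. \<forall>y. \<bar>y - x\<bar> < \<delta> \<longrightarrow> u y < u x + e))"

definition is_fuzzy_number :: "(real \<Rightarrow> real) \<Rightarrow> bool" where
  "is_fuzzy_number u \<longleftrightarrow>
     (\<forall>x. 0 \<le> u x \<and> u x \<le> 1) \<and> (\<exists>x. u x = 1) \<and> fuzzy_convex u \<and> usc_fun u \<and>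
     compact (closure {x. u x > 0})"

lemma fuzzy_number_ex: "is_fuzzy_number (\<lambda>x. if x = 0 then 1 else 0)"
proof -
  have c: "{x::real. 0 < (if x = 0 then 1 else (0::real))} = {0}" by auto
  have u: "usc_fun (\<lambda>x::real. if x = 0 then 1 else (0::real))"
    unfolding usc_fun_def
  proof (intro allI impI)
    fix x e :: real assume e: "e > 0"
    show "\<exists>\<delta>>0. \<forall>y. \<bar>y - x\<bar> < \<delta> \<longrightarrow>
            (if y = 0 then 1 else 0) < (if x = 0 then 1 else (0::real)) + e"
    proof (cases "x = 0")
      case True then show ?thesis using e by (intro exI[of _ 1]) auto
    next
      case False then show ?thesis using e by (intro exI[of _ "\<bar>x\<bar>"]) auto
    qed
  qed
  show ?thesis unfolding is_fuzzy_number_def fuzzy_convex_def c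
    using u by auto
qed

typedef fuzzy = "{u. is_fuzzy_number u}" morphisms fmem Abs_fuzzy
  using fuzzy_number_ex by blast

definition level :: "fuzzy \<Rightarrow> real \<Rightarrow> real set" where
  "level u r = (if r = 0 then closure {x. fmem u x > 0} else {x. r \<le> fmem u x})"

definition lower :: "fuzzy \<Rightarrow> real \<Rightarrow> real" where
  "lower u r = Inf (level u r)"

definition upper :: "fuzzy \<Rightarrow> real \<Rightarrow> real" where
  "upper u r = Sup (level u r)"

definition fD :: "fuzzy \<Rightarrow> fuzzy \<Rightarrow> real" where
  "fD u v = (SUP r\<in>{0..1}. max \<bar>lower u r - lower v r\<bar> \<bar>upper u r - upper v r\<bar>)"

text \<open>Zadeh-extension operations (they satisfy the level-set identities of the paper).\<close>
definition fzero :: fuzzy where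
  "fzero = Abs_fuzzy (\<lambda>x. if x = 0 then 1 else 0)"

definition fadd :: "fuzzy \<Rightarrow> fuzzy \<Rightarrow> fuzzy" where
  "fadd u v = Abs_fuzzy (\<lambda>x. SUP y. min (fmem u y) (fmem v (x - y)))"

definition fscale :: "real \<Rightarrow> fuzzy \<Rightarrow> fuzzy" where
  "fscale c u = (if c = 0 then fzero else Abs_fuzzy (\<lambda>x. fmem u (x / c)))"

definition fcont_on :: "real set \<Rightarrow> (real \<Rightarrow> fuzzy) \<Rightarrow> bool" where
  "fcont_on S f \<longleftrightarrow>
     (\<forall>t\<in>S. \<forall>e>0. \<exists>\<delta>>0. \<forall>s\<in>S. \<bar>s - t\<bar> < \<delta> \<longrightarrow> fD (f s) (f t) < e)"

text \<open>Hukuhara derivative (Puri--Ralescu / Kaleva), one-sided at the endpoints of S.\<close>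
definition has_fhderiv_at :: "real set \<Rightarrow> (real \<Rightarrow> fuzzy) \<Rightarrow> fuzzy \<Rightarrow> real \<Rightarrow> bool" where
  "has_fhderiv_at S f g t \<longleftrightarrow>
     (\<forall>e>0. \<exists>\<delta>>0. \<forall>h. 0 < h \<and> h < \<delta> \<longrightarrow>
        (t + h \<in> S \<longrightarrow> (\<exists>w. f (t + h) = fadd (f t) w \<and> fD (fscale (1 / h) w) g < e)) \<and>
        (t - h \<in> S \<longrightarrow> (\<exists>w. f t = fadd (f (t - h)) w \<and> fD (fscale (1 / h) w) g < e)))"

definition fhdifferentiable_on :: "real set \<Rightarrow> (real \<Rightarrow> fuzzy) \<Rightarrow> bool" where
  "fhdifferentiable_on S f \<longleftrightarrow> (\<forall>t\<in>S. \<exists>g. has_fhderiv_at S f g t)"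

definition fhderiv :: "real set \<Rightarrow> (real \<Rightarrow> fuzzy) \<Rightarrow> real \<Rightarrow> fuzzy" where
  "fhderiv S f = (\<lambda>t. if t \<in> S then (THE g. has_fhderiv_at S f g t) else fzero)"

definition fCp_on :: "nat \<Rightarrow> real set \<Rightarrow> (real \<Rightarrow> fuzzy) \<Rightarrow> bool" where
  "fCp_on p S f \<longleftrightarrow>
     (\<forall>i\<le>p. fcont_on S ((fhderiv S ^^ i) f)) \<and>
     (\<forall>i<p. fhdifferentiable_on S ((fhderiv S ^^ i) f))"

definition fmeasurable_on :: "real \<Rightarrow> real \<Rightarrow> (real \<Rightarrow> fuzzy) \<Rightarrow> bool" where
  "fmeasurable_on a b f \<longleftrightarrow>
     (\<forall>r\<in>{0..1}. (\<lambda>t. lower (f t) r) \<in> borel_measurable (restrict_space lborel {a..b}) \<and>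
                 (\<lambda>t. upper (f t) r) \<in> borel_measurable (restrict_space lborel {a..b}))"

text \<open>A uniform carrier type: an element of a base space is a map
  (sequence index) \<Rightarrow> (time) \<Rightarrow> fuzzy number; unused arguments are ignored
  (the element is constant in them), function-space elements are fzero outside [a,b].\<close>
type_synonym felem = "nat \<Rightarrow> real \<Rightarrow> fuzzy"

datatype fspace =
    SpRF
  | SpC real real
  | SpL real real real        \<comment> \<open>L^p([a,b];R_F), parameters p a b\<close>
  | SpCp nat real real        \<comment> \<open>C^p([a,b];R_F), parameters p a b\<close>
  | Splp real
  | Spm
  | Spc
  | Spc0

fun valid_fspace :: "fspace \<Rightarrow> bool" where
  "valid_fspace SpRF = True"
| "valid_fspace (SpC a b) = (a < b)"
| "valid_fspace (SpL p a b) = (1 \<le> p \<and> a < b)"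
| "valid_fspace (SpCp p a b) = (a < b)"
| "valid_fspace (Splp p) = (1 \<le> p)"
| "valid_fspace Spm = True"
| "valid_fspace Spc = True"
| "valid_fspace Spc0 = True"

definition ext_on :: "real \<Rightarrow> real \<Rightarrow> (real \<Rightarrow> fuzzy) \<Rightarrow> felem" where
  "ext_on a b f = (\<lambda>n t. if t \<in> {a..b} then f t else fzero)"

fun bcarrier :: "fspace \<Rightarrow> felem set" where
  "bcarrier SpRF = {(\<lambda>n t. u) | u. True}"
| "bcarrier (SpC a b) = {ext_on a b f | f. fcont_on {a..b} f}"
| "bcarrier (SpL p a b) = {ext_on a b f | f. fmeasurable_on a b f \<and>
      (\<integral>\<^sup>+ t. indicator {a..b} t * ennreal (fD (f t) fzero powr p) \<partial>lborel) < \<infinity>}"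
| "bcarrier (SpCp p a b) = {ext_on a b f | f. fCp_on p {a..b} f}"
| "bcarrier (Splp p) = {(\<lambda>n t. x n) | x. summable (\<lambda>n. fD (x n) fzero powr p)}"
| "bcarrier Spm = {(\<lambda>n t. x n) | x. \<exists>B. \<forall>n. fD (x n) fzero \<le> B}"
| "bcarrier Spc = {(\<lambda>n t. x n) | x. \<exists>l. (\<lambda>n. fD (x n) l) \<longlonglongrightarrow> 0}"
| "bcarrier Spc0 = {(\<lambda>n t. x n) | x. (\<lambda>n. fD (x n) fzero) \<longlonglongrightarrow> 0}"

fun bdist :: "fspace \<Rightarrow> felem \<Rightarrow> felem \<Rightarrow> real" where
  "bdist SpRF x y = fD (x 0 0) (y 0 0)"
| "bdist (SpC a b) x y = (SUP t\<in>{a..b}. fD (x 0 t) (y 0 t))"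
| "bdist (SpL p a b) x y =
     enn2real (\<integral>\<^sup>+ t. indicator {a..b} t * ennreal (fD (x 0 t) (y 0 t) powr p) \<partial>lborel) powr (1 / p)"
| "bdist (SpCp p a b) x y =
     (\<Sum>i\<le>p. SUP t\<in>{a..b}. fD (((fhderiv {a..b}) ^^ i) (x 0) t) (((fhderiv {a..b}) ^^ i) (y 0) t))"
| "bdist (Splp p) x y = (\<Sum>n. fD (x n 0) (y n 0) powr p) powr (1 / p)"
| "bdist Spm x y = (SUP n. fD (x n 0) (y n 0))"
| "bdist Spc x y = (SUP n. fD (x n 0) (y n 0))"
| "bdist Spc0 x y = (SUP n. fD (x n 0) (y n 0))"

text \<open>A finite Cartesian product of base spaces (a single space is a product of length 1),
  with the max metric.  Elements: component index \<Rightarrow> felem, fzero beyond the last component.\<close>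
type_synonym pelem = "nat \<Rightarrow> felem"

definition pcarrier :: "fspace list \<Rightarrow> pelem set" where
  "pcarrier Ss = {x. (\<forall>i<length Ss. x i \<in> bcarrier (Ss ! i)) \<and>
                     (\<forall>i\<ge>length Ss. x i = (\<lambda>n t. fzero))}"

definition pdist :: "fspace list \<Rightarrow> pelem \<Rightarrow> pelem \<Rightarrow> real" where
  "pdist Ss x y = Max {bdist (Ss ! i) (x i) (y i) | i. i < length Ss}"

definition padd :: "pelem \<Rightarrow> pelem \<Rightarrow> pelem" where
  "padd x y = (\<lambda>i n t. fadd (x i n t) (y i n t))"

definition pscale :: "real \<Rightarrow> pelem \<Rightarrow> pelem" where
  "pscale c x = (\<lambda>i n t. fscale c (x i n t))"

definition pzero :: pelem where
  "pzero = (\<lambda>i n t. fzero)"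

definition pnorm :: "fspace list \<Rightarrow> pelem \<Rightarrow> real" where
  "pnorm Ss x = pdist Ss pzero x"

definition lin_functional :: "fspace list \<Rightarrow> (pelem \<Rightarrow> real) \<Rightarrow> bool" where
  "lin_functional Ss A \<longleftrightarrow>
     (\<forall>x\<in>pcarrier Ss. \<forall>y\<in>pcarrier Ss. A (padd x y) = A x + A y) \<and>
     (\<forall>x\<in>pcarrier Ss. \<forall>c::real. A (pscale c x) = c * A x)"

definition lin_operator :: "fspace list \<Rightarrow> (pelem \<Rightarrow> pelem) \<Rightarrow> bool" where
  "lin_operator Ss A \<longleftrightarrow>
     (\<forall>x\<in>pcarrier Ss. A x \<in> pcarrier Ss) \<and>
     (\<forall>x\<in>pcarrier Ss. \<forall>y\<in>pcarrier Ss. A (padd x y) = padd (A x) (A y)) \<and>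
     (\<forall>x\<in>pcarrier Ss. \<forall>c::real. A (pscale c x) = pscale c (A x))"

definition cont_at_zero_functional :: "fspace list \<Rightarrow> (pelem \<Rightarrow> real) \<Rightarrow> bool" where
  "cont_at_zero_functional Ss A \<longleftrightarrow>
     (\<forall>e>0. \<exists>\<delta>>0. \<forall>x\<in>pcarrier Ss. pdist Ss pzero x < \<delta> \<longrightarrow> \<bar>A x - A pzero\<bar> < e)"

definition cont_at_zero_operator :: "fspace list \<Rightarrow> (pelem \<Rightarrow> pelem) \<Rightarrow> bool" where
  "cont_at_zero_operator Ss A \<longleftrightarrow>
     (\<forall>e>0. \<exists>\<delta>>0. \<forall>x\<in>pcarrier Ss. pdist Ss pzero x < \<delta> \<longrightarrow> pdist Ss (A pzero) (A x) < e)"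

definition opnorm_functional :: "fspace list \<Rightarrow> (pelem \<Rightarrow> real) \<Rightarrow> real" where
  "opnorm_functional Ss A =
     Inf {M. M > 0 \<and> (\<forall>x\<in>pcarrier Ss. \<bar>A x\<bar> \<le> M * pnorm Ss x)}"

definition opnorm_operator :: "fspace list \<Rightarrow> (pelem \<Rightarrow> pelem) \<Rightarrow> real" where
  "opnorm_operator Ss A =
     Inf {M. M > 0 \<and> (\<forall>x\<in>pcarrier Ss. pnorm Ss (A x) \<le> M * pnorm Ss x)}"

end

theory Submission
  imports Defs
begin


lemma fmem_fn: "is_fuzzy_number (fmem u)" using fmem by auto
lemma fmem_ge0: "0 \<le> fmem u x" using fmem_fn[of u] unfolding is_fuzzy_number_def by auto
lemma fmem_le1: "fmem u x \<le> 1" using fmem_fn[of u] unfolding is_fuzzy_number_def by auto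
lemma fmem_normal: "\<exists>x. fmem u x = 1" using fmem_fn[of u] unfolding is_fuzzy_number_def by auto
lemma fmem_convex: "fuzzy_convex (fmem u)" using fmem_fn[of u] unfolding is_fuzzy_number_def by auto
lemma fmem_usc: "usc_fun (fmem u)" using fmem_fn[of u] unfolding is_fuzzy_number_def by auto
lemma fmem_compact: "compact (closure {x. fmem u x > 0})" using fmem_fn[of u] unfolding is_fuzzy_number_def by auto

lemma usc_seq:
  assumes g: "usc_fun g" and X: "X \<longlonglongrightarrow> y" and a: "a \<longlonglongrightarrow> s" and le: "\<And>n. a n \<le> g (X n)"
  shows "s \<le> g y"
proof (rule ccontr)
  assume "\<not> s \<le> g y"
  define e where "e = (s - g y) / 2"
  have e: "e > 0" using \<open>\<not> s \<le> g y\<close> by (simp add: e_def)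
  obtain d where d: "d > 0" "\<And>z. \<bar>z - y\<bar> < d \<Longrightarrow> g z < g y + e"
    using g e unfolding usc_fun_def by blast
  have ev1: "eventually (\<lambda>n. dist (X n) y < d) sequentially" using X d(1) tendstoD by blast
  have ev2: "eventually (\<lambda>n. dist (a n) s < e) sequentially" using a e tendstoD by blast
  obtain N where N: "\<forall>n\<ge>N. dist (X n) y < d \<and> dist (a n) s < e"
    using eventually_conj[OF ev1 ev2] unfolding eventually_sequentially by blast
  obtain n where "dist (X n) y < d" "dist (a n) s < e" using N by blast
  then have "g (X n) < g y + e" "a n > s - e" using d(2) by (auto simp: dist_real_def)
  moreover have "g y + e = s - e" unfolding e_def by (simp add: field_simps)
  ultimately show False using le[of n] by linarith
qed

lemma bounded_supp: "bounded {x. fmem u x > 0}"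
  using fmem_compact[of u] compact_closure by blast

definition lev :: "fuzzy \<Rightarrow> real \<Rightarrow> real set" where
  "lev u r = {x. r \<le> fmem u x}"

lemma lev_nonempty: "r \<le> 1 \<Longrightarrow> lev u r \<noteq> {}"
  using fmem_normal[of u] fmem_le1[of u] unfolding lev_def by (metis (mono_tags) empty_Collect_eq)

lemma lev_sub: "0 < r \<Longrightarrow> lev u r \<subseteq> closure {x. fmem u x > 0}"
  unfolding lev_def using closure_subset by fastforce

lemma lev_bounded: "0 < r \<Longrightarrow> bounded (lev u r)"
  using lev_sub bounded_subset fmem_compact compact_imp_bounded by metis

lemma lev_closed: "closed (lev u r)"
  unfolding closed_sequential_limits lev_def
proof (intro allI impI, elim conjE)
  fix X l assume "\<forall>n. X n \<in> {x. r \<le> fmem u x}" "X \<longlonglongrightarrow> l"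
  then show "l \<in> {x. r \<le> fmem u x}"
    using usc_seq[OF fmem_usc, of X l "\<lambda>n. r" r] by auto
qed

lemma lev_convex: "a \<in> lev u r \<Longrightarrow> b \<in> lev u r \<Longrightarrow> a \<le> x \<Longrightarrow> x \<le> b \<Longrightarrow> x \<in> lev u r"
proof -
  assume a: "a \<in> lev u r" and b: "b \<in> lev u r" and x: "a \<le> x" "x \<le> b"
  show ?thesis
  proof (cases "a = b")
    case True then show ?thesis using a x by auto
  next
    case False
    then have ab: "a < b" using x by auto
    define t where "t = (b - x) / (b - a)"
    have t: "0 \<le> t" "t \<le> 1" using ab x by (auto simp: t_def divide_simps)
    have tt: "t * (b - a) = b - x" using ab by (simp add: t_def)
    have "t * a + (1 - t) * b = b - t * (b - a)" by (simp add: algebra_simps)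
    then have "t * a + (1 - t) * b = x" using tt by simp
    then have "min (fmem u a) (fmem u b) \<le> fmem u x"
      using fmem_convex[of u] t unfolding fuzzy_convex_def by metis
    then show ?thesis using a b unfolding lev_def by auto
  qed
qed

lemma lev_interval:
  assumes r: "0 < r" "r \<le> 1"
  shows "lev u r = {Inf (lev u r) .. Sup (lev u r)}" "Inf (lev u r) \<le> Sup (lev u r)"
    "Inf (lev u r) \<in> lev u r" "Sup (lev u r) \<in> lev u r"
proof -
  have ne: "lev u r \<noteq> {}" using lev_nonempty r by auto
  have bd: "bounded (lev u r)" using lev_bounded r by auto
  have bb: "bdd_below (lev u r)" "bdd_above (lev u r)"
    using bd by (auto simp: bounded_imp_bdd_below bounded_imp_bdd_above)
  show i: "Inf (lev u r) \<in> lev u r" using closed_contains_Inf[OF ne bb(1) lev_closed] .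
  show s: "Sup (lev u r) \<in> lev u r" using closed_contains_Sup[OF ne bb(2) lev_closed] .
  show "Inf (lev u r) \<le> Sup (lev u r)" using i bb cInf_lower cSup_upper by fastforce
  show "lev u r = {Inf (lev u r) .. Sup (lev u r)}"
  proof
    show "lev u r \<subseteq> {Inf (lev u r)..Sup (lev u r)}"
      using bb by (auto intro: cInf_lower cSup_upper)
    show "{Inf (lev u r)..Sup (lev u r)} \<subseteq> lev u r"
    proof
      fix x assume "x \<in> {Inf (lev u r)..Sup (lev u r)}"
      then show "x \<in> lev u r" using lev_convex[OF i s, of x] by simp
    qed
  qed
qed

lemma level_pos: "0 < r \<Longrightarrow> level u r = lev u r"
  unfolding level_def lev_def by auto

lemma supp_ne: "closure {x. fmem u x > 0} \<noteq> {}"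
proof -
  obtain x where "fmem u x = 1" using fmem_normal[of u] by blast
  then have "x \<in> {x. fmem u x > 0}" by simp
  then have "x \<in> closure {x. fmem u x > 0}" by (rule subsetD[OF closure_subset])
  then show ?thesis by (metis empty_iff)
qed

lemma lower_upper_bounds:
  assumes r: "0 \<le> r" "r \<le> 1"
  shows "lower u 0 \<le> lower u r" "lower u r \<le> upper u r" "upper u r \<le> upper u 0"
proof -
  let ?C = "closure {x. fmem u x > 0}"
  have bC: "bdd_below ?C" "bdd_above ?C"
    using compact_imp_bounded[OF fmem_compact[of u]]
    by (auto simp: bounded_imp_bdd_below bounded_imp_bdd_above)
  have l0: "lower u 0 = Inf ?C" "upper u 0 = Sup ?C" unfolding lower_def upper_def level_def by auto
  have "lower u 0 \<le> lower u r \<and> lower u r \<le> upper u r \<and> upper u r \<le> upper u 0"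
  proof (cases "r = 0")
    case True
    then show ?thesis using l0 cInf_le_cSup[OF supp_ne[of u] bC(2) bC(1)] by simp
  next
    case False
    then have r0: "0 < r" using r by auto
    have ll: "lower u r = Inf (lev u r)" "upper u r = Sup (lev u r)"
      using level_pos[OF r0] unfolding lower_def upper_def by auto
    have ne: "lev u r \<noteq> {}" using lev_nonempty r by auto
    have sub: "lev u r \<subseteq> ?C" using lev_sub[OF r0] .
    have 1: "Inf ?C \<le> Inf (lev u r)" by (rule cInf_superset_mono[OF ne bC(1) sub])
    have 2: "Sup (lev u r) \<le> Sup ?C" by (rule cSup_subset_mono[OF ne bC(2) sub])
    have 3: "Inf (lev u r) \<le> Sup (lev u r)" by (rule lev_interval(2)[OF r0 r(2)])
    show ?thesis unfolding ll l0 using 1 2 3 by simp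
  qed
  then show "lower u 0 \<le> lower u r" "lower u r \<le> upper u r" "upper u r \<le> upper u 0" by auto
qed

definition fB :: "fuzzy \<Rightarrow> real" where "fB u = \<bar>lower u 0\<bar> + \<bar>upper u 0\<bar>"

lemma lu_abs: "0 \<le> r \<Longrightarrow> r \<le> 1 \<Longrightarrow> \<bar>lower u r\<bar> \<le> fB u \<and> \<bar>upper u r\<bar> \<le> fB u"
  using lower_upper_bounds[of r u] unfolding fB_def by auto

definition gD :: "fuzzy \<Rightarrow> fuzzy \<Rightarrow> real \<Rightarrow> real" where
  "gD u v r = max \<bar>lower u r - lower v r\<bar> \<bar>upper u r - upper v r\<bar>"

lemma fD_gD: "fD u v = (SUP r\<in>{0..1}. gD u v r)" unfolding fD_def gD_def ..

lemma gD_le_B: "r \<in> {0..1} \<Longrightarrow> gD u v r \<le> fB u + fB v"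
proof -
  assume r: "r \<in> {0..1}"
  have a: "\<bar>lower u r\<bar> \<le> fB u" "\<bar>upper u r\<bar> \<le> fB u" using lu_abs[of r u] r by auto
  have b: "\<bar>lower v r\<bar> \<le> fB v" "\<bar>upper v r\<bar> \<le> fB v" using lu_abs[of r v] r by auto
  have "\<bar>lower u r - lower v r\<bar> \<le> fB u + fB v" using a b by linarith
  moreover have "\<bar>upper u r - upper v r\<bar> \<le> fB u + fB v" using a b by linarith
  ultimately show ?thesis unfolding gD_def by simp
qed

lemma gD_bdd: "bdd_above (gD u v ` {0..1})"
  by (rule bdd_aboveI2[where M="fB u + fB v"]) (rule gD_le_B)

lemma gD_le_fD: "r \<in> {0..1} \<Longrightarrow> gD u v r \<le> fD u v"
  unfolding fD_gD using gD_bdd by (rule cSUP_upper[rotated])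

lemma fD_le: "(\<And>r. r \<in> {0..1} \<Longrightarrow> gD u v r \<le> M) \<Longrightarrow> fD u v \<le> M"
  unfolding fD_gD by (rule cSUP_least) auto

lemma fD_nonneg: "0 \<le> fD u v"
  using gD_le_fD[of 0 u v] unfolding gD_def by (meson atLeastAtMost_iff order.trans abs_ge_zero max.cobounded1 order_refl zero_le_one)

lemma fD_refl: "fD u u = 0"
  using fD_le[of u u 0] fD_nonneg[of u u] unfolding gD_def by auto

lemma fD_sym: "fD u v = fD v u"
  unfolding fD_def by (simp add: abs_minus_commute)

lemma fD_triangle: "fD u w \<le> fD u v + fD v w"
proof (rule fD_le)
  fix r :: real assume r: "r \<in> {0..1}"
  have "gD u w r \<le> gD u v r + gD v w r" unfolding gD_def by auto
  also have "\<dots> \<le> fD u v + fD v w" using gD_le_fD[OF r] add_mono by blast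
  finally show "gD u w r \<le> fD u v + fD v w" .
qed

lemma fuzzy_eqI:
  assumes "\<And>r. 0 < r \<Longrightarrow> r \<le> 1 \<Longrightarrow> lower u r = lower v r \<and> upper u r = upper v r"
  shows "u = v"
proof -
  have lv: "lev u r = lev v r" if "0 < r" "r \<le> 1" for r
  proof -
    have "lower u r = Inf (lev u r)" "upper u r = Sup (lev u r)"
         "lower v r = Inf (lev v r)" "upper v r = Sup (lev v r)"
      using level_pos[OF that(1)] unfolding lower_def upper_def by auto
    then show ?thesis using lev_interval(1)[OF that, of u] lev_interval(1)[OF that, of v] assms[OF that] by metis
  qed
  have "fmem u x = fmem v x" for x
  proof (rule ccontr)
    assume ne: "fmem u x \<noteq> fmem v x"
    show False
    proof (cases "fmem u x < fmem v x")
      case True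
      have "x \<in> lev v (fmem v x)" unfolding lev_def by auto
      then have "x \<in> lev u (fmem v x)" using lv[of "fmem v x"] True fmem_ge0[of u x] fmem_le1[of v x] by auto
      then show False using True unfolding lev_def by auto
    next
      case False
      then have F: "fmem v x < fmem u x" using ne by auto
      have "x \<in> lev u (fmem u x)" unfolding lev_def by auto
      then have "x \<in> lev v (fmem u x)" using lv[of "fmem u x"] F fmem_ge0[of v x] fmem_le1[of u x] by auto
      then show False using F unfolding lev_def by auto
    qed
  qed
  then show ?thesis using fmem_inject by blast
qed

lemma fD_zero_eq: "fD u v = 0 \<Longrightarrow> u = v"
proof (rule fuzzy_eqI)
  fix r :: real assume "fD u v = 0" "0 < r" "r \<le> 1"
  then have "gD u v r \<le> 0" using gD_le_fD[of r u v] by auto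
  then show "lower u r = lower v r \<and> upper u r = upper v r" unfolding gD_def by auto
qed



lemma fmem_fzero: "fmem fzero = (\<lambda>x. if x = 0 then 1 else 0)"
  unfolding fzero_def using Abs_fuzzy_inverse fuzzy_number_ex by auto

lemma fscale_fn:
  assumes c: "c > 0"
  shows "is_fuzzy_number (\<lambda>x. fmem u (x / c))"
proof -
  have r: "\<forall>x. 0 \<le> fmem u (x / c) \<and> fmem u (x / c) \<le> 1" using fmem_ge0 fmem_le1 by auto
  obtain x0 where x0: "fmem u x0 = 1" using fmem_normal by blast
  have n: "\<exists>x. fmem u (x / c) = 1" using x0 c by (intro exI[of _ "x0 * c"]) simp
  have cv: "fuzzy_convex (\<lambda>x. fmem u (x / c))"
    unfolding fuzzy_convex_def
  proof (intro allI impI)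
    fix x y t :: real assume t: "0 \<le> t \<and> t \<le> 1"
    have "(t * x + (1 - t) * y) / c = t * (x / c) + (1 - t) * (y / c)" using c by (simp add: field_simps)
    then show "min (fmem u (x / c)) (fmem u (y / c)) \<le> fmem u ((t * x + (1 - t) * y) / c)"
      using fmem_convex[of u] t unfolding fuzzy_convex_def by metis
  qed
  have us: "usc_fun (\<lambda>x. fmem u (x / c))"
    unfolding usc_fun_def
  proof (intro allI impI)
    fix x e :: real assume e: "e > 0"
    obtain d where d: "d > 0" "\<And>y. \<bar>y - x / c\<bar> < d \<Longrightarrow> fmem u y < fmem u (x / c) + e"
      using fmem_usc[of u] e unfolding usc_fun_def by blast
    show "\<exists>d>0. \<forall>y. \<bar>y - x\<bar> < d \<longrightarrow> fmem u (y / c) < fmem u (x / c) + e"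
    proof (intro exI[of _ "c * d"] conjI allI impI)
      show "0 < c * d" using c d by simp
      fix y assume "\<bar>y - x\<bar> < c * d"
      then have "\<bar>y / c - x / c\<bar> < d" using c by (simp add: diff_divide_distrib[symmetric] abs_divide pos_divide_less_eq mult.commute)
      then show "fmem u (y / c) < fmem u (x / c) + e" using d(2) by blast
    qed
  qed
  obtain a where a: "\<forall>x\<in>{x. fmem u x > 0}. \<bar>x\<bar> \<le> a" using bounded_supp[of u] unfolding bounded_real by blast
  have "\<forall>x\<in>{x. fmem u (x / c) > 0}. \<bar>x\<bar> \<le> c * a"
  proof
    fix x assume "x \<in> {x. fmem u (x / c) > 0}"
    then have "\<bar>x / c\<bar> \<le> a" using a by auto
    then show "\<bar>x\<bar> \<le> c * a" using c by (simp add: abs_divide divide_le_eq mult.commute)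
  qed
  then have "bounded {x. fmem u (x / c) > 0}" unfolding bounded_real by blast
  then have "compact (closure {x. fmem u (x / c) > 0})" by simp
  then show ?thesis unfolding is_fuzzy_number_def using r n cv us by blast
qed

lemma fmem_fscale: "c > 0 \<Longrightarrow> fmem (fscale c u) = (\<lambda>x. fmem u (x / c))"
  unfolding fscale_def using Abs_fuzzy_inverse fscale_fn by auto

lemma fscale_fzero: "fscale c fzero = fzero"
proof (cases "c = 0")
  case True then show ?thesis unfolding fscale_def by simp
next
  case False
  have "(\<lambda>x. fmem fzero (x / c)) = (\<lambda>x. if x = 0 then 1 else 0)"
    using False unfolding fmem_fzero by auto
  then show ?thesis using False unfolding fscale_def by (simp add: fzero_def)
qed

lemma fscale_inv: "c > 0 \<Longrightarrow> fscale (1 / c) (fscale c u) = u"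
proof -
  assume c: "c > 0"
  have "fmem (fscale (1 / c) (fscale c u)) = (\<lambda>x. fmem u x)"
    using c by (simp add: fmem_fscale)
  then show ?thesis by (metis fmem_inverse)
qed

lemma inf_scale:
  assumes c: "(c::real) > 0" and ne: "K \<noteq> {}" and b: "bdd_below K"
  shows "Inf ((*) c ` K) = c * Inf K"
proof (rule antisym)
  have bb: "bdd_below ((*) c ` K)"
  proof -
    obtain m where "\<forall>x\<in>K. m \<le> x" using b unfolding bdd_below_def by blast
    then have "\<forall>y\<in>(*) c ` K. c * m \<le> y" using c by auto
    then show ?thesis unfolding bdd_below_def by blast
  qed
  show "c * Inf K \<le> Inf ((*) c ` K)"
  proof (rule cInf_greatest)
    show "(*) c ` K \<noteq> {}" using ne by simp
    fix y assume "y \<in> (*) c ` K"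
    then obtain x where x: "x \<in> K" "y = c * x" by blast
    have "Inf K \<le> x" using cInf_lower[OF x(1) b] .
    then show "c * Inf K \<le> y" using x(2) c by simp
  qed
  have "Inf ((*) c ` K) / c \<le> Inf K"
  proof (rule cInf_greatest[OF ne])
    fix x assume "x \<in> K"
    then have "Inf ((*) c ` K) \<le> c * x" using bb by (intro cInf_lower) auto
    then show "Inf ((*) c ` K) / c \<le> x" using c by (simp add: divide_le_eq mult.commute)
  qed
  then show "Inf ((*) c ` K) \<le> c * Inf K" using c by (simp add: divide_le_eq mult.commute)
qed

lemma sup_scale:
  assumes c: "(c::real) > 0" and ne: "K \<noteq> {}" and b: "bdd_above K"
  shows "Sup ((*) c ` K) = c * Sup K"
proof (rule antisym)
  have bb: "bdd_above ((*) c ` K)"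
  proof -
    obtain m where "\<forall>x\<in>K. x \<le> m" using b unfolding bdd_above_def by blast
    then have "\<forall>y\<in>(*) c ` K. y \<le> c * m" using c by auto
    then show ?thesis unfolding bdd_above_def by blast
  qed
  show "Sup ((*) c ` K) \<le> c * Sup K"
  proof (rule cSup_least)
    show "(*) c ` K \<noteq> {}" using ne by simp
    fix y assume "y \<in> (*) c ` K"
    then obtain x where x: "x \<in> K" "y = c * x" by blast
    have "x \<le> Sup K" using cSup_upper[OF x(1) b] .
    then show "y \<le> c * Sup K" using x(2) c by simp
  qed
  have "Sup K \<le> Sup ((*) c ` K) / c"
  proof (rule cSup_least[OF ne])
    fix x assume "x \<in> K"
    then have "c * x \<le> Sup ((*) c ` K)" using bb by (intro cSup_upper) auto
    then show "x \<le> Sup ((*) c ` K) / c" using c by (simp add: le_divide_eq mult.commute)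
  qed
  then show "c * Sup K \<le> Sup ((*) c ` K)" using c by (simp add: le_divide_eq mult.commute)
qed

lemma level_bdd:
  assumes "0 \<le> r" "r \<le> 1"
  shows "level u r \<noteq> {}" "bdd_below (level u r)" "bdd_above (level u r)"
proof -
  have "level u r \<noteq> {} \<and> bounded (level u r)"
  proof (cases "r = 0")
    case True
    then show ?thesis unfolding level_def using supp_ne[of u] compact_imp_bounded[OF fmem_compact[of u]] by simp
  next
    case False
    then have r: "0 < r" using assms by auto
    show ?thesis unfolding level_pos[OF r] using lev_nonempty[OF assms(2)] lev_bounded[OF r] by blast
  qed
  then show "level u r \<noteq> {}" "bdd_below (level u r)" "bdd_above (level u r)"
    by (auto simp: bounded_imp_bdd_below bounded_imp_bdd_above)
qed

lemma level_fscale: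
  assumes c: "c > 0"
  shows "level (fscale c u) r = (*) c ` level u r"
proof -
  have img: "{x. P (x / c)} = (*) c ` {y. P y}" for P :: "real \<Rightarrow> bool"
  proof
    show "{x. P (x / c)} \<subseteq> (*) c ` {y. P y}"
    proof
      fix x assume "x \<in> {x. P (x / c)}"
      then have "x = c * (x / c)" "x / c \<in> {y. P y}" using c by auto
      then show "x \<in> (*) c ` {y. P y}" by (rule image_eqI)
    qed
    show "(*) c ` {y. P y} \<subseteq> {x. P (x / c)}" using c by auto
  qed
  show ?thesis
  proof (cases "r = 0")
    case True
    have "closure {x. 0 < fmem u (x / c)} = (*) c ` closure {y. 0 < fmem u y}"
      using img[of "\<lambda>y. 0 < fmem u y"] closure_scaleR[of c "{y. 0 < fmem u y}"]
      by (simp add: scaleR_conv_of_real)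
    then show ?thesis using True unfolding level_def fmem_fscale[OF c] by simp
  next
    case False
    then show ?thesis unfolding level_def fmem_fscale[OF c] using img[of "\<lambda>y. r \<le> fmem u y"] by simp
  qed
qed

lemma lower_fscale: "c > 0 \<Longrightarrow> 0 \<le> r \<Longrightarrow> r \<le> 1 \<Longrightarrow> lower (fscale c u) r = c * lower u r"
  unfolding lower_def by (simp add: level_fscale inf_scale level_bdd)

lemma upper_fscale: "c > 0 \<Longrightarrow> 0 \<le> r \<Longrightarrow> r \<le> 1 \<Longrightarrow> upper (fscale c u) r = c * upper u r"
  unfolding upper_def by (simp add: level_fscale sup_scale level_bdd)

lemma gD_fscale: "c > 0 \<Longrightarrow> r \<in> {0..1} \<Longrightarrow> gD (fscale c u) (fscale c v) r = c * gD u v r"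
proof -
  assume c: "c > 0" and r: "r \<in> {0..1}"
  have "\<bar>c * a - c * b\<bar> = c * \<bar>a - b\<bar>" for a b :: real
    using c by (simp add: right_diff_distrib[symmetric] abs_mult)
  then show ?thesis unfolding gD_def using r c
    by (simp add: lower_fscale upper_fscale max_mult_distrib_left)
qed

lemma fD_fscale: assumes c: "c > 0" shows "fD (fscale c u) (fscale c v) = c * fD u v"
proof (rule antisym)
  show "fD (fscale c u) (fscale c v) \<le> c * fD u v"
  proof (rule fD_le)
    fix r :: real assume r: "r \<in> {0..1}"
    show "gD (fscale c u) (fscale c v) r \<le> c * fD u v"
      using gD_fscale[OF c r] gD_le_fD[OF r, of u v] c by simp
  qed
  have "fD u v \<le> fD (fscale c u) (fscale c v) / c"
  proof (rule fD_le)
    fix r :: real assume r: "r \<in> {0..1}"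
    have "c * gD u v r \<le> fD (fscale c u) (fscale c v)"
      using gD_fscale[OF c r] gD_le_fD[OF r, of "fscale c u" "fscale c v"] by simp
    then show "gD u v r \<le> fD (fscale c u) (fscale c v) / c" using c by (simp add: le_divide_eq mult.commute)
  qed
  then show "c * fD u v \<le> fD (fscale c u) (fscale c v)" using c by (simp add: le_divide_eq mult.commute)
qed

lemma fD_fscale0: "c > 0 \<Longrightarrow> fD fzero (fscale c u) = c * fD fzero u"
  using fD_fscale[of c fzero u] fscale_fzero by simp

lemma fD_fscale0': "c > 0 \<Longrightarrow> fD (fscale c u) fzero = c * fD u fzero"
  using fD_fscale[of c u fzero] fscale_fzero by simp



definition Fz :: "fuzzy \<Rightarrow> fuzzy \<Rightarrow> real \<Rightarrow> real" where
  "Fz u v x = (SUP y. min (fmem u y) (fmem v (x - y)))"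

lemma Fz_bdd: "bdd_above (range (\<lambda>y. min (fmem u y) (fmem v (x - y))))"
proof (rule bdd_aboveI2[where M=1])
  fix y show "min (fmem u y) (fmem v (x - y)) \<le> 1" using fmem_le1[of u y] by simp
qed

lemma Fz_upper: "min (fmem u y) (fmem v (x - y)) \<le> Fz u v x"
  unfolding Fz_def by (rule cSUP_upper[OF UNIV_I Fz_bdd])

lemma Fz_le1: "Fz u v x \<le> 1"
  unfolding Fz_def
proof (rule cSUP_least)
  fix y show "min (fmem u y) (fmem v (x - y)) \<le> 1" using fmem_le1[of u y] by simp
qed simp

lemma Fz_ge0: "0 \<le> Fz u v x"
  using Fz_upper[of u 0 v x] fmem_ge0[of u 0] fmem_ge0[of v x] by simp

lemma bw_real:
  fixes f :: "nat \<Rightarrow> real"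
  assumes "compact (K::real set)" "\<forall>n. f n \<in> K"
  shows "\<exists>l r. strict_mono r \<and> (f \<circ> r) \<longlonglongrightarrow> l"
proof -
  obtain l r where "l \<in> K" "strict_mono (r :: nat \<Rightarrow> nat)" "(f \<circ> r) \<longlonglongrightarrow> l"
    using seq_compactE[OF compact_imp_seq_compact[OF assms(1)] assms(2)] .
  then show ?thesis by blast
qed

lemma Fz_attain: "\<exists>y. Fz u v x = min (fmem u y) (fmem v (x - y))"
proof (cases "Fz u v x = 0")
  case True
  then show ?thesis using Fz_upper[of u 0 v x] fmem_ge0[of u 0] fmem_ge0[of v x]
    by (intro exI[of _ 0]) simp
next
  case False
  define s where "s = Fz u v x"
  have s: "0 < s" using False Fz_ge0[of u v x] unfolding s_def by simp
  define a where "a n = s - s / 2 * inverse (real (Suc n))" for n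
  have alim: "a \<longlonglongrightarrow> s"
    unfolding a_def using tendsto_diff[OF tendsto_const tendsto_mult[OF tendsto_const LIMSEQ_inverse_real_of_nat], of s "s/2"]
    by simp
  have ainv: "inverse (real (Suc n)) \<le> 1" "0 < inverse (real (Suc n))" for n by (auto simp: inverse_le_1_iff)
  have als: "a n < s" "s / 2 \<le> a n" for n
    using ainv[of n] s unfolding a_def by (auto simp: mult_le_cancel_left1)
  have "\<exists>y. a n < min (fmem u y) (fmem v (x - y))" for n
  proof -
    have "a n < Fz u v x" using als(1) unfolding s_def .
    then show ?thesis unfolding Fz_def using less_cSUP_iff[OF _ Fz_bdd] by blast
  qed
  then obtain Y where Y: "\<And>n. a n < min (fmem u (Y n)) (fmem v (x - Y n))" by metis
  have "\<forall>n. Y n \<in> closure {x. fmem u x > 0}"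
  proof
    fix n
    have "0 < fmem u (Y n)" using Y[of n] als(2)[of n] s by linarith
    then show "Y n \<in> closure {x. fmem u x > 0}" by (intro subsetD[OF closure_subset]) simp
  qed
  then obtain l r where lr: "strict_mono r" "(Y \<circ> r) \<longlonglongrightarrow> l" using bw_real[OF fmem_compact] by blast
  have ar: "(a \<circ> r) \<longlonglongrightarrow> s" using LIMSEQ_subseq_LIMSEQ[OF alim lr(1)] .
  have 1: "s \<le> fmem u l"
    using usc_seq[OF fmem_usc lr(2) ar] Y by (simp add: less_imp_le)
  have "(\<lambda>n. x - (Y \<circ> r) n) \<longlonglongrightarrow> x - l" using tendsto_diff[OF tendsto_const lr(2)] .
  then have 2: "s \<le> fmem v (x - l)"
    using usc_seq[OF fmem_usc _ ar, of "\<lambda>n. x - (Y \<circ> r) n"] Y by (simp add: less_imp_le)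
  have "min (fmem u l) (fmem v (x - l)) \<le> s" using Fz_upper unfolding s_def by blast
  then show ?thesis using 1 2 unfolding s_def by (intro exI[of _ l]) linarith
qed

lemma Fz_fn: "is_fuzzy_number (Fz u v)"
proof -
  have r: "\<forall>x. 0 \<le> Fz u v x \<and> Fz u v x \<le> 1" using Fz_ge0 Fz_le1 by blast
  obtain a b where ab: "fmem u a = 1" "fmem v b = 1" using fmem_normal by metis
  have "1 \<le> Fz u v (a + b)" using Fz_upper[of u a v "a + b"] ab by simp
  then have n: "\<exists>x. Fz u v x = 1" using Fz_le1[of u v "a + b"] by (intro exI[of _ "a + b"]) simp
  have cv: "fuzzy_convex (Fz u v)"
    unfolding fuzzy_convex_def
  proof (intro allI impI)
    fix x1 x2 t :: real assume t: "0 \<le> t \<and> t \<le> 1"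
    obtain y1 where y1: "Fz u v x1 = min (fmem u y1) (fmem v (x1 - y1))" using Fz_attain by blast
    obtain y2 where y2: "Fz u v x2 = min (fmem u y2) (fmem v (x2 - y2))" using Fz_attain by blast
    have 1: "min (fmem u y1) (fmem u y2) \<le> fmem u (t * y1 + (1 - t) * y2)"
      using fmem_convex[of u] t unfolding fuzzy_convex_def by blast
    have 2: "min (fmem v (x1 - y1)) (fmem v (x2 - y2)) \<le> fmem v (t * (x1 - y1) + (1 - t) * (x2 - y2))"
      using fmem_convex[of v] t unfolding fuzzy_convex_def by blast
    have eq: "t * (x1 - y1) + (1 - t) * (x2 - y2) = (t * x1 + (1 - t) * x2) - (t * y1 + (1 - t) * y2)"
      by (simp add: algebra_simps)
    have 3: "min (fmem u (t * y1 + (1 - t) * y2)) (fmem v ((t * x1 + (1 - t) * x2) - (t * y1 + (1 - t) * y2)))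
             \<le> Fz u v (t * x1 + (1 - t) * x2)" by (rule Fz_upper)
    show "min (Fz u v x1) (Fz u v x2) \<le> Fz u v (t * x1 + (1 - t) * x2)"
      using 1 2 3 unfolding y1 y2 eq by linarith
  qed
  have us: "usc_fun (Fz u v)"
    unfolding usc_fun_def
  proof (intro allI impI, rule ccontr)
    fix x e :: real assume e: "e > 0"
    assume nex: "\<not> (\<exists>d>0. \<forall>y. \<bar>y - x\<bar> < d \<longrightarrow> Fz u v y < Fz u v x + e)"
    define s where "s = Fz u v x + e"
    have s: "0 < s" using e Fz_ge0[of u v x] unfolding s_def by linarith
    have "\<exists>z. \<bar>z - x\<bar> < inverse (real (Suc n)) \<and> s \<le> Fz u v z" for n
    proof -
      have "0 < inverse (real (Suc n))" by simp
      then show ?thesis using nex unfolding s_def by (meson not_less)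
    qed
    then obtain Z where Z: "\<And>n. \<bar>Z n - x\<bar> < inverse (real (Suc n))" "\<And>n. s \<le> Fz u v (Z n)" by metis
    have Zl: "Z \<longlonglongrightarrow> x"
    proof (rule tendsto_sandwich[of "\<lambda>n. x - inverse (real (Suc n))" _ _ "\<lambda>n. x + inverse (real (Suc n))"])
      show "\<forall>\<^sub>F n in sequentially. x - inverse (real (Suc n)) \<le> Z n" using Z(1) by (intro always_eventually) (metis abs_diff_less_iff less_imp_le)
      show "\<forall>\<^sub>F n in sequentially. Z n \<le> x + inverse (real (Suc n))" using Z(1) by (intro always_eventually) (metis abs_diff_less_iff less_imp_le)
      show "(\<lambda>n. x - inverse (real (Suc n))) \<longlonglongrightarrow> x" using tendsto_diff[OF tendsto_const LIMSEQ_inverse_real_of_nat, of x] by simp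
      show "(\<lambda>n. x + inverse (real (Suc n))) \<longlonglongrightarrow> x" using tendsto_add[OF tendsto_const LIMSEQ_inverse_real_of_nat, of x] by simp
    qed
    have "\<exists>y. s \<le> fmem u y \<and> s \<le> fmem v (Z n - y)" for n
    proof -
      obtain y where "Fz u v (Z n) = min (fmem u y) (fmem v (Z n - y))" using Fz_attain by blast
      then show ?thesis using Z(2)[of n] by (intro exI[of _ y]) linarith
    qed
    then obtain Y where Y: "\<And>n. s \<le> fmem u (Y n)" "\<And>n. s \<le> fmem v (Z n - Y n)" by metis
    have "\<forall>n. Y n \<in> closure {x. fmem u x > 0}"
    proof
      fix n
      have "0 < fmem u (Y n)" using Y(1)[of n] s by linarith
      then show "Y n \<in> closure {x. fmem u x > 0}" by (intro subsetD[OF closure_subset]) simp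
    qed
    then obtain l r where lr: "strict_mono r" "(Y \<circ> r) \<longlonglongrightarrow> l" using bw_real[OF fmem_compact] by blast
    have 1: "s \<le> fmem u l"
      using usc_seq[OF fmem_usc lr(2) tendsto_const, of s] Y(1) by simp
    have "(Z \<circ> r) \<longlonglongrightarrow> x" using LIMSEQ_subseq_LIMSEQ[OF Zl lr(1)] .
    then have "(\<lambda>n. (Z \<circ> r) n - (Y \<circ> r) n) \<longlonglongrightarrow> x - l" using tendsto_diff lr(2) by blast
    then have 2: "s \<le> fmem v (x - l)"
      using usc_seq[OF fmem_usc _ tendsto_const, of "\<lambda>n. (Z \<circ> r) n - (Y \<circ> r) n" "x - l" s] Y(2) by simp
    have "min (fmem u l) (fmem v (x - l)) \<le> Fz u v x" by (rule Fz_upper)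
    then show False using 1 2 e unfolding s_def by linarith
  qed
  obtain A where A: "\<forall>x\<in>{x. fmem u x > 0}. \<bar>x\<bar> \<le> A" using bounded_supp[of u] unfolding bounded_real by blast
  obtain B where B: "\<forall>x\<in>{x. fmem v x > 0}. \<bar>x\<bar> \<le> B" using bounded_supp[of v] unfolding bounded_real by blast
  have "\<forall>x\<in>{x. Fz u v x > 0}. \<bar>x\<bar> \<le> A + B"
  proof
    fix x assume "x \<in> {x. Fz u v x > 0}"
    then have x: "Fz u v x > 0" by simp
    obtain y where "Fz u v x = min (fmem u y) (fmem v (x - y))" using Fz_attain by blast
    then have "fmem u y > 0" "fmem v (x - y) > 0" using x by auto
    then have "\<bar>y\<bar> \<le> A" "\<bar>x - y\<bar> \<le> B" using A B by auto
    then show "\<bar>x\<bar> \<le> A + B" by linarith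
  qed
  then have "bounded {x. Fz u v x > 0}" unfolding bounded_real by blast
  then have "compact (closure {x. Fz u v x > 0})" by simp
  then show ?thesis unfolding is_fuzzy_number_def using r n cv us by blast
qed

lemma fmem_fadd: "fmem (fadd u v) = Fz u v"
proof -
  have "fadd u v = Abs_fuzzy (Fz u v)" unfolding fadd_def Fz_def ..
  then show ?thesis using Abs_fuzzy_inverse Fz_fn by simp
qed

lemma lower_fadd:
  assumes r: "0 < r" "r \<le> 1"
  shows "lower (fadd u v) r = lower u r + lower v r \<and> upper (fadd u v) r = upper u r + upper v r"
proof -
  have L: "lower w r = Inf (lev w r)" "upper w r = Sup (lev w r)" for w
    using level_pos[OF r(1)] unfolding lower_def upper_def by auto
  note iu = lev_interval[OF r, of u] and iv = lev_interval[OF r, of v]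
  have mem: "a + b \<in> lev (fadd u v) r" if "a \<in> lev u r" "b \<in> lev v r" for a b
  proof -
    have "min (fmem u a) (fmem v (a + b - a)) \<le> Fz u v (a + b)" by (rule Fz_upper)
    then show ?thesis using that unfolding lev_def fmem_fadd by auto
  qed
  have dec: "\<exists>y. y \<in> lev u r \<and> x - y \<in> lev v r" if "x \<in> lev (fadd u v) r" for x
  proof -
    obtain y where "Fz u v x = min (fmem u y) (fmem v (x - y))" using Fz_attain by blast
    then show ?thesis using that unfolding lev_def fmem_fadd by (intro exI[of _ y]) auto
  qed
  have "Inf (lev (fadd u v) r) = Inf (lev u r) + Inf (lev v r)"
  proof (rule cInf_eq_minimum)
    show "Inf (lev u r) + Inf (lev v r) \<in> lev (fadd u v) r" using mem iu(3) iv(3) by blast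
    fix x assume "x \<in> lev (fadd u v) r"
    then obtain y where y: "y \<in> lev u r" "x - y \<in> lev v r" using dec by blast
    then have "Inf (lev u r) \<le> y" "Inf (lev v r) \<le> x - y" using iu(1) iv(1) by auto
    then show "Inf (lev u r) + Inf (lev v r) \<le> x" by linarith
  qed
  moreover have "Sup (lev (fadd u v) r) = Sup (lev u r) + Sup (lev v r)"
  proof (rule cSup_eq_maximum)
    show "Sup (lev u r) + Sup (lev v r) \<in> lev (fadd u v) r" using mem iu(4) iv(4) by blast
    fix x assume "x \<in> lev (fadd u v) r"
    then obtain y where y: "y \<in> lev u r" "x - y \<in> lev v r" using dec by blast
    then have "y \<le> Sup (lev u r)" "x - y \<le> Sup (lev v r)" using iu(1) iv(1) by auto
    then show "x \<le> Sup (lev u r) + Sup (lev v r)" by linarith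
  qed
  ultimately show ?thesis unfolding L by simp
qed

lemma fadd_cancel: "fadd u w1 = fadd u w2 \<Longrightarrow> w1 = w2"
proof (rule fuzzy_eqI)
  fix r :: real assume e: "fadd u w1 = fadd u w2" and r: "0 < r" "r \<le> 1"
  show "lower w1 r = lower w2 r \<and> upper w1 r = upper w2 r"
    using lower_fadd[OF r, of u w1] lower_fadd[OF r, of u w2] e by simp
qed

lemma fadd_fzero: "fadd u fzero = u"
proof -
  have "Fz u fzero x = fmem u x" for x
  proof (rule antisym)
    show "Fz u fzero x \<le> fmem u x" unfolding Fz_def
    proof (rule cSUP_least)
      fix y show "min (fmem u y) (fmem fzero (x - y)) \<le> fmem u x"
        unfolding fmem_fzero by (cases "y = x") (auto simp: fmem_ge0)
    qed simp
    show "fmem u x \<le> Fz u fzero x" using Fz_upper[of u x fzero x] fmem_le1[of u x] unfolding fmem_fzero by simp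
  qed
  then have "fmem (fadd u fzero) = fmem u" unfolding fmem_fadd by auto
  then show ?thesis using fmem_inject by blast
qed

lemma fscale_fadd:
  assumes c: "c > 0"
  shows "fscale c (fadd u v) = fadd (fscale c u) (fscale c v)"
proof -
  have "Fz u v (x / c) = Fz (fscale c u) (fscale c v) x" for x
  proof -
    have e: "(\<lambda>y. min (fmem u (y / c)) (fmem v ((x - y) / c))) = (\<lambda>y. min (fmem u y) (fmem v (x / c - y))) \<circ> (\<lambda>y. y / c)"
      using c by (auto simp: diff_divide_distrib)
    have s: "range (\<lambda>y::real. y / c) = UNIV"
    proof -
      have "z = (z * c) / c" for z using c by simp
      then show ?thesis by (metis UNIV_eq_I rangeI)
    qed
    show ?thesis unfolding Fz_def fmem_fscale[OF c] e image_comp[symmetric] s ..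
  qed
  then have "fmem (fscale c (fadd u v)) = fmem (fadd (fscale c u) (fscale c v))"
    unfolding fmem_fscale[OF c] fmem_fadd by auto
  then show ?thesis using fmem_inject by blast
qed

lemma fscale_fscale: "a > 0 \<Longrightarrow> b > 0 \<Longrightarrow> fscale a (fscale b u) = fscale b (fscale a u)"
proof -
  assume a: "a > 0" and b: "b > 0"
  have "fmem (fscale a (fscale b u)) = fmem (fscale b (fscale a u))"
    using a b by (simp add: fmem_fscale mult.commute)
  then show ?thesis using fmem_inject by blast
qed



lemma fhderiv_cong_has:
  assumes "\<forall>s\<in>S. F s = G s" "t \<in> S"
  shows "has_fhderiv_at S F g t \<longleftrightarrow> has_fhderiv_at S G g t"
proof -
  have "(t + h \<in> S \<longrightarrow> (\<exists>w. F (t + h) = fadd (F t) w \<and> fD (fscale (1 / h) w) g < e)) \<longleftrightarrow>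
        (t + h \<in> S \<longrightarrow> (\<exists>w. G (t + h) = fadd (G t) w \<and> fD (fscale (1 / h) w) g < e))"
       "(t - h \<in> S \<longrightarrow> (\<exists>w. F t = fadd (F (t - h)) w \<and> fD (fscale (1 / h) w) g < e)) \<longleftrightarrow>
        (t - h \<in> S \<longrightarrow> (\<exists>w. G t = fadd (G (t - h)) w \<and> fD (fscale (1 / h) w) g < e))" for h e
    using assms by auto
  then show ?thesis unfolding has_fhderiv_at_def by simp
qed

lemma fhderiv_cong:
  assumes "\<forall>s\<in>S. F s = G s"
  shows "fhderiv S F = fhderiv S G"
proof
  fix t show "fhderiv S F t = fhderiv S G t"
    unfolding fhderiv_def using fhderiv_cong_has[OF assms] by auto
qed

lemma fD_small_eq:
  assumes "\<And>e. e > 0 \<Longrightarrow> fD u v < 2 * e"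
  shows "u = v"
proof -
  have "fD u v \<le> 0"
  proof (rule ccontr)
    assume "\<not> fD u v \<le> 0"
    then have "fD u v > 0" by simp
    then have "fD u v / 2 > 0" by simp
    then have "fD u v < 2 * (fD u v / 2)" by (rule assms)
    then show False by linarith
  qed
  then have "fD u v = 0" using fD_nonneg[of u v] by linarith
  then show ?thesis by (rule fD_zero_eq)
qed

lemma has_fhderivD:
  assumes "has_fhderiv_at S f g t" "e > 0"
  obtains d where "d > 0" "\<And>h. 0 < h \<Longrightarrow> h < d \<Longrightarrow> t + h \<in> S \<Longrightarrow> (\<exists>w. f (t + h) = fadd (f t) w \<and> fD (fscale (1 / h) w) g < e)"
    "\<And>h. 0 < h \<Longrightarrow> h < d \<Longrightarrow> t - h \<in> S \<Longrightarrow> (\<exists>w. f t = fadd (f (t - h)) w \<and> fD (fscale (1 / h) w) g < e)"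
proof -
  from assms(1)[unfolded has_fhderiv_at_def, rule_format, OF assms(2)]
  obtain d where "d > 0" and d: "\<forall>h. 0 < h \<and> h < d \<longrightarrow>
        (t + h \<in> S \<longrightarrow> (\<exists>w. f (t + h) = fadd (f t) w \<and> fD (fscale (1 / h) w) g < e)) \<and>
        (t - h \<in> S \<longrightarrow> (\<exists>w. f t = fadd (f (t - h)) w \<and> fD (fscale (1 / h) w) g < e))"
    by (elim exE conjE)
  show ?thesis
  proof (rule that[OF \<open>d > 0\<close>])
    fix h assume h: "0 < h" "h < d"
    have "(t + h \<in> S \<longrightarrow> (\<exists>w. f (t + h) = fadd (f t) w \<and> fD (fscale (1 / h) w) g < e)) \<and>
        (t - h \<in> S \<longrightarrow> (\<exists>w. f t = fadd (f (t - h)) w \<and> fD (fscale (1 / h) w) g < e))"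
      using d h by simp
    then show "t + h \<in> S \<Longrightarrow> (\<exists>w. f (t + h) = fadd (f t) w \<and> fD (fscale (1 / h) w) g < e)"
      and "t - h \<in> S \<Longrightarrow> (\<exists>w. f t = fadd (f (t - h)) w \<and> fD (fscale (1 / h) w) g < e)" by simp_all
  qed
qed

lemma fhderiv_unique:
  assumes ab: "a < b" and t: "t \<in> {a..b}"
    and g1: "has_fhderiv_at {a..b} f g1 t" and g2: "has_fhderiv_at {a..b} f g2 t"
  shows "g1 = g2"
proof (rule fD_small_eq)
  fix e :: real assume e: "e > 0"
  obtain d1 where d1: "d1 > 0" "\<And>h. 0 < h \<Longrightarrow> h < d1 \<Longrightarrow> t + h \<in> {a..b} \<Longrightarrow> (\<exists>w. f (t + h) = fadd (f t) w \<and> fD (fscale (1 / h) w) g1 < e)"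
    "\<And>h. 0 < h \<Longrightarrow> h < d1 \<Longrightarrow> t - h \<in> {a..b} \<Longrightarrow> (\<exists>w. f t = fadd (f (t - h)) w \<and> fD (fscale (1 / h) w) g1 < e)"
    using has_fhderivD[OF g1 e] by metis
  obtain d2 where d2: "d2 > 0" "\<And>h. 0 < h \<Longrightarrow> h < d2 \<Longrightarrow> t + h \<in> {a..b} \<Longrightarrow> (\<exists>w. f (t + h) = fadd (f t) w \<and> fD (fscale (1 / h) w) g2 < e)"
    "\<And>h. 0 < h \<Longrightarrow> h < d2 \<Longrightarrow> t - h \<in> {a..b} \<Longrightarrow> (\<exists>w. f t = fadd (f (t - h)) w \<and> fD (fscale (1 / h) w) g2 < e)"
    using has_fhderivD[OF g2 e] by metis
  define h where "h = min (min d1 d2) (b - a) / 2"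
  have h: "0 < h" "h < d1" "h < d2" "h \<le> (b - a) / 2" using d1(1) d2(1) ab unfolding h_def by auto
  have fin: "fD g1 g2 < 2 * e" if "fD (fscale (1 / h) w) g1 < e" "fD (fscale (1 / h) w) g2 < e" for w
  proof -
    have "fD g1 g2 \<le> fD g1 (fscale (1 / h) w) + fD (fscale (1 / h) w) g2" by (rule fD_triangle)
    then show ?thesis using that fD_sym[of g1 "fscale (1 / h) w"] by linarith
  qed
  show "fD g1 g2 < 2 * e"
  proof (cases "t + h \<in> {a..b}")
    case True
    obtain w1 where w1: "f (t + h) = fadd (f t) w1" "fD (fscale (1 / h) w1) g1 < e" using d1(2)[OF h(1) h(2) True] by blast
    obtain w2 where w2: "f (t + h) = fadd (f t) w2" "fD (fscale (1 / h) w2) g2 < e" using d2(2)[OF h(1) h(3) True] by blast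
    have "w1 = w2" using w1(1) w2(1) fadd_cancel by metis
    then show ?thesis using fin w1(2) w2(2) by blast
  next
    case False
    then have T: "t - h \<in> {a..b}" using t h ab by auto
    obtain w1 where w1: "f t = fadd (f (t - h)) w1" "fD (fscale (1 / h) w1) g1 < e" using d1(3)[OF h(1) h(2) T] by blast
    obtain w2 where w2: "f t = fadd (f (t - h)) w2" "fD (fscale (1 / h) w2) g2 < e" using d2(3)[OF h(1) h(3) T] by blast
    have "w1 = w2" using w1(1) w2(1) fadd_cancel by metis
    then show ?thesis using fin w1(2) w2(2) by blast
  qed
qed

lemma fhderiv_scale:
  assumes c: "c > 0" and g: "has_fhderiv_at S f g t"
  shows "has_fhderiv_at S (\<lambda>s. fscale c (f s)) (fscale c g) t"
  unfolding has_fhderiv_at_def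
proof (intro allI impI)
  fix e :: real assume e: "e > 0"
  have ec: "e / c > 0" using e c by simp
  obtain d where d: "d > 0" "\<And>h. 0 < h \<Longrightarrow> h < d \<Longrightarrow> t + h \<in> S \<Longrightarrow> (\<exists>w. f (t + h) = fadd (f t) w \<and> fD (fscale (1 / h) w) g < e / c)"
    "\<And>h. 0 < h \<Longrightarrow> h < d \<Longrightarrow> t - h \<in> S \<Longrightarrow> (\<exists>w. f t = fadd (f (t - h)) w \<and> fD (fscale (1 / h) w) g < e / c)"
    using has_fhderivD[OF g ec] by metis
  have key: "fD (fscale (1 / h) (fscale c w)) (fscale c g) < e"
    if "0 < h" "fD (fscale (1 / h) w) g < e / c" for h w
  proof -
    have "fD (fscale (1 / h) (fscale c w)) (fscale c g) = c * fD (fscale (1 / h) w) g"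
      using fscale_fscale[of "1 / h" c w] that(1) c fD_fscale[OF c] by simp
    also have "\<dots> < c * (e / c)" using that(2) c by (intro mult_strict_left_mono) auto
    finally show ?thesis using c by simp
  qed
  show "\<exists>d>0. \<forall>h. 0 < h \<and> h < d \<longrightarrow>
        (t + h \<in> S \<longrightarrow> (\<exists>w. fscale c (f (t + h)) = fadd (fscale c (f t)) w \<and> fD (fscale (1 / h) w) (fscale c g) < e)) \<and>
        (t - h \<in> S \<longrightarrow> (\<exists>w. fscale c (f t) = fadd (fscale c (f (t - h))) w \<and> fD (fscale (1 / h) w) (fscale c g) < e))"
  proof (intro exI[of _ d] conjI allI impI)
    show "0 < d" by (rule d(1))
    fix h assume h: "0 < h \<and> h < d"
    {
      assume th: "t + h \<in> S"
      obtain w where w: "f (t + h) = fadd (f t) w" "fD (fscale (1 / h) w) g < e / c" using d(2)[OF _ _ th] h by blast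
      show "\<exists>w. fscale c (f (t + h)) = fadd (fscale c (f t)) w \<and> fD (fscale (1 / h) w) (fscale c g) < e"
        using w key[of h w] h fscale_fadd[OF c] by (intro exI[of _ "fscale c w"]) simp
    }
    {
      assume th: "t - h \<in> S"
      obtain w where w: "f t = fadd (f (t - h)) w" "fD (fscale (1 / h) w) g < e / c" using d(3)[OF _ _ th] h by blast
      show "\<exists>w. fscale c (f t) = fadd (fscale c (f (t - h))) w \<and> fD (fscale (1 / h) w) (fscale c g) < e"
        using w key[of h w] h fscale_fadd[OF c] by (intro exI[of _ "fscale c w"]) simp
    }
  qed
qed

lemma fhderiv_const0: "has_fhderiv_at S (\<lambda>s. fzero) fzero t"
  unfolding has_fhderiv_at_def
  by (intro allI impI exI[of _ 1]) (auto intro!: exI[of _ fzero] simp: fadd_fzero fscale_fzero fD_refl)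

lemma fhderiv_has:
  assumes ab: "a < b" and t: "t \<in> {a..b}" and g: "has_fhderiv_at {a..b} f g t"
  shows "fhderiv {a..b} f t = g"
proof -
  have "(THE g. has_fhderiv_at {a..b} f g t) = g"
    using g fhderiv_unique[OF ab t] by blast
  then show ?thesis unfolding fhderiv_def using t by simp
qed

lemma fhderiv_out: "t \<notin> S \<Longrightarrow> fhderiv S f t = fzero"
  unfolding fhderiv_def by simp

lemma fhderiv_zero:
  assumes ab: "a < b"
  shows "((fhderiv {a..b}) ^^ i) (\<lambda>s. fzero) = (\<lambda>s. fzero)"
proof (induction i)
  case 0 then show ?case by simp
next
  case (Suc i)
  have e: "fhderiv {a..b} (\<lambda>s. fzero) t = fzero" for t
  proof (cases "t \<in> {a..b}")
    case True then show ?thesis by (rule fhderiv_has[OF ab _ fhderiv_const0])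
  next
    case False then show ?thesis by (rule fhderiv_out)
  qed
  have "((fhderiv {a..b}) ^^ Suc i) (\<lambda>s. fzero) = fhderiv {a..b} (((fhderiv {a..b}) ^^ i) (\<lambda>s. fzero))" by (simp only: funpow.simps comp_apply)
  also have "\<dots> = fhderiv {a..b} (\<lambda>s. fzero)" by (simp only: Suc.IH)
  also have "\<dots> = (\<lambda>s. fzero)" using e by (rule ext)
  finally show ?case .
qed

lemma fcont_scale:
  assumes c: "c > 0" and f: "fcont_on S f"
  shows "fcont_on S (\<lambda>s. fscale c (f s))"
  unfolding fcont_on_def
proof (intro ballI allI impI)
  fix t e assume t: "t \<in> S" and e: "(e::real) > 0"
  have ec: "e / c > 0" using e c by simp
  from f[unfolded fcont_on_def, rule_format, OF t ec]
  obtain d where d: "d > 0" "\<forall>s\<in>S. \<bar>s - t\<bar> < d \<longrightarrow> fD (f s) (f t) < e / c"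
    by (elim exE conjE)
  show "\<exists>d>0. \<forall>s\<in>S. \<bar>s - t\<bar> < d \<longrightarrow> fD (fscale c (f s)) (fscale c (f t)) < e"
  proof (intro exI[of _ d] conjI ballI impI)
    show "0 < d" by (rule d(1))
    fix s assume "s \<in> S" "\<bar>s - t\<bar> < d"
    then have "fD (f s) (f t) < e / c" using d(2) by blast
    then have "c * fD (f s) (f t) < c * (e / c)" using c by (intro mult_strict_left_mono) auto
    then show "fD (fscale c (f s)) (fscale c (f t)) < e" using c fD_fscale[OF c] by simp
  qed
qed

lemma fCp_scale:
  assumes ab: "a < b" and c: "c > 0" and f: "fCp_on p {a..b} f"
  shows "\<forall>i\<le>p. ((fhderiv {a..b}) ^^ i) (\<lambda>s. fscale c (f s)) = (\<lambda>s. fscale c (((fhderiv {a..b}) ^^ i) f s))"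
proof (intro allI impI)
  fix i assume "i \<le> p"
  then show "((fhderiv {a..b}) ^^ i) (\<lambda>s. fscale c (f s)) = (\<lambda>s. fscale c (((fhderiv {a..b}) ^^ i) f s))"
  proof (induction i)
    case 0 then show ?case by simp
  next
    case (Suc i)
    let ?D = "fhderiv {a..b}"
    let ?G = "(?D ^^ i) f"
    have ip: "i < p" using Suc by simp
    have diff: "fhdifferentiable_on {a..b} ?G" using f ip unfolding fCp_on_def by blast
    have "?D (\<lambda>s. fscale c (?G s)) t = fscale c (?D ?G t)" for t
    proof (cases "t \<in> {a..b}")
      case True
      obtain g where g: "has_fhderiv_at {a..b} ?G g t" using diff True unfolding fhdifferentiable_on_def by blast
      have 1: "?D ?G t = g" using fhderiv_has[OF ab True g] .
      have 2: "?D (\<lambda>s. fscale c (?G s)) t = fscale c g" using fhderiv_has[OF ab True fhderiv_scale[OF c g]] .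
      show ?thesis using 1 2 by simp
    next
      case False
      then show ?thesis by (simp add: fhderiv_out fscale_fzero)
    qed
    then show ?case using Suc by simp
  qed
qed

lemma fCp_scale_on:
  assumes ab: "a < b" and c: "c > 0" and f: "fCp_on p {a..b} f"
  shows "fCp_on p {a..b} (\<lambda>s. fscale c (f s))"
proof -
  let ?D = "fhderiv {a..b}"
  note e = fCp_scale[OF ab c f]
  have 1: "\<forall>i\<le>p. fcont_on {a..b} ((?D ^^ i) (\<lambda>s. fscale c (f s)))"
  proof (intro allI impI)
    fix i assume i: "i \<le> p"
    have "fcont_on {a..b} ((?D ^^ i) f)" using f i unfolding fCp_on_def by blast
    then show "fcont_on {a..b} ((?D ^^ i) (\<lambda>s. fscale c (f s)))" using e i fcont_scale[OF c] by simp
  qed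
  have 2: "\<forall>i<p. fhdifferentiable_on {a..b} ((?D ^^ i) (\<lambda>s. fscale c (f s)))"
  proof (intro allI impI)
    fix i assume i: "i < p"
    have d: "fhdifferentiable_on {a..b} ((?D ^^ i) f)" using f i unfolding fCp_on_def by blast
    have "fhdifferentiable_on {a..b} (\<lambda>s. fscale c (((?D ^^ i) f) s))"
      unfolding fhdifferentiable_on_def
    proof
      fix t assume "t \<in> {a..b}"
      then obtain g where "has_fhderiv_at {a..b} ((?D ^^ i) f) g t" using d unfolding fhdifferentiable_on_def by blast
      then show "\<exists>g. has_fhderiv_at {a..b} (\<lambda>s. fscale c (((?D ^^ i) f) s)) g t"
        using fhderiv_scale[OF c] by blast
    qed
    then show "fhdifferentiable_on {a..b} ((?D ^^ i) (\<lambda>s. fscale c (f s)))" using e i by simp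
  qed
  show ?thesis unfolding fCp_on_def using 1 2 by blast
qed

lemma fcont_cong: "\<forall>s\<in>S. F s = G s \<Longrightarrow> fcont_on S F = fcont_on S G"
  unfolding fcont_on_def by simp

lemma fhdiff_cong: "\<forall>s\<in>S. F s = G s \<Longrightarrow> fhdifferentiable_on S F = fhdifferentiable_on S G"
  unfolding fhdifferentiable_on_def using fhderiv_cong_has by blast

lemma funpow_cong:
  assumes "\<forall>s\<in>S. F s = G s"
  shows "i > 0 \<Longrightarrow> ((fhderiv S) ^^ i) F = ((fhderiv S) ^^ i) G"
proof (induction i)
  case 0 then show ?case by simp
next
  case (Suc i)
  show ?case
  proof (cases "i = 0")
    case True then show ?thesis using fhderiv_cong[OF assms] by simp
  next
    case False then show ?thesis using Suc by simp
  qed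
qed

lemma funpow_cong_on:
  assumes "\<forall>s\<in>S. F s = G s"
  shows "\<forall>s\<in>S. ((fhderiv S) ^^ i) F s = ((fhderiv S) ^^ i) G s"
  using funpow_cong[OF assms, of i] assms by (cases "i = 0") auto

lemma fCp_cong: "\<forall>s\<in>S. F s = G s \<Longrightarrow> fCp_on p S F = fCp_on p S G"
  unfolding fCp_on_def using funpow_cong_on[of S F G] fcont_cong fhdiff_cong by metis



definition bscale :: "real \<Rightarrow> felem \<Rightarrow> felem" where
  "bscale c y = (\<lambda>n t. fscale c (y n t))"

lemma ext_scale: "bscale c (ext_on a b f) = ext_on a b (\<lambda>t. fscale c (f t))"
  unfolding bscale_def ext_on_def by (intro ext) (simp add: fscale_fzero)

lemma fD_cont_abs: "\<bar>fD fzero u - fD fzero v\<bar> \<le> fD u v"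
proof -
  have "fD fzero u \<le> fD fzero v + fD v u" by (rule fD_triangle)
  moreover have "fD fzero v \<le> fD fzero u + fD u v" by (rule fD_triangle)
  ultimately show ?thesis using fD_sym[of u v] by linarith
qed

lemma bdd_cont:
  assumes G: "fcont_on {a..b} G"
  shows "bdd_above ((\<lambda>t. fD fzero (G t)) ` {a..b})"
proof -
  have "continuous_on {a..b} (\<lambda>t. fD fzero (G t))"
    unfolding continuous_on_iff
  proof (intro ballI allI impI)
    fix t e assume t: "t \<in> {a..b}" and e: "(e::real) > 0"
    from G[unfolded fcont_on_def, rule_format, OF t e]
    obtain d where d: "d > 0" "\<forall>s\<in>{a..b}. \<bar>s - t\<bar> < d \<longrightarrow> fD (G s) (G t) < e"
      by (elim exE conjE)
    show "\<exists>d>0. \<forall>s\<in>{a..b}. dist s t < d \<longrightarrow> dist (fD fzero (G s)) (fD fzero (G t)) < e"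
    proof (intro exI[of _ d] conjI ballI impI)
      show "0 < d" by (rule d(1))
      fix s assume s: "s \<in> {a..b}" "dist s t < d"
      then have "fD (G s) (G t) < e" using d(2) by (simp add: dist_real_def)
      then show "dist (fD fzero (G s)) (fD fzero (G t)) < e"
        using fD_cont_abs[of "G s" "G t"] by (simp add: dist_real_def)
    qed
  qed
  then have "compact ((\<lambda>t. fD fzero (G t)) ` {a..b})" by (rule compact_continuous_image[OF _ compact_Icc])
  then show ?thesis by (intro bounded_imp_bdd_above compact_imp_bounded)
qed

lemma sup_img_scale:
  assumes c: "(c::real) > 0" and ne: "A \<noteq> {}" and bd: "bdd_above (g ` A)"
  shows "(SUP t\<in>A. c * g t) = c * (SUP t\<in>A. g t)"
proof -
  have "(\<lambda>t. c * g t) ` A = (*) c ` (g ` A)" by (simp add: image_image)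
  then show ?thesis using sup_scale[OF c _ bd] ne by simp
qed

lemma sup_nonneg:
  assumes ne: "A \<noteq> {}" and bd: "bdd_above (g ` A)" and nn: "\<And>t. (0::real) \<le> g t"
  shows "0 \<le> (SUP t\<in>A. g t)"
proof -
  obtain t where t: "t \<in> A" using ne by blast
  have "g t \<le> (SUP t\<in>A. g t)" by (rule cSUP_upper[OF t bd])
  then show ?thesis using nn[of t] by linarith
qed

lemma ext_SUP: "(SUP t\<in>{a..b}. fD fzero (ext_on a b g 0 t)) = (SUP t\<in>{a..b}. fD fzero (g t))"
  by (rule SUP_cong) (auto simp: ext_on_def)

lemma powr_scale:
  assumes c: "(c::real) > 0" and p: "p \<ge> 1" and E: "0 \<le> E"
  shows "(c powr p * E) powr (1 / p) = c * E powr (1 / p)"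
proof -
  have "(c powr p * E) powr (1 / p) = (c powr p) powr (1 / p) * E powr (1 / p)"
    using E by (simp add: powr_mult)
  also have "(c powr p) powr (1 / p) = c powr (p * (1 / p))" by (rule powr_powr)
  also have "p * (1 / p) = 1" using p by simp
  finally show ?thesis using c by (simp add: powr_one)
qed

lemma nnI_ge:
  assumes a: "(a::real) > 0"
  shows "ennreal a * integral\<^sup>N M f \<le> (\<integral>\<^sup>+ x. ennreal a * f x \<partial>M)"
proof -
  have "ennreal a * integral\<^sup>N M f = (SUP g\<in>{g. simple_function M g \<and> g \<le> f}. ennreal a * integral\<^sup>S M g)"
    unfolding nn_integral_def by (rule SUP_mult_left_ennreal)
  also have "\<dots> \<le> (\<integral>\<^sup>+ x. ennreal a * f x \<partial>M)"
  proof (rule SUP_least)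
    fix g assume "g \<in> {g. simple_function M g \<and> g \<le> f}"
    then have g: "simple_function M g" "g \<le> f" by auto
    have "ennreal a * integral\<^sup>S M g = integral\<^sup>S M (\<lambda>x. ennreal a * g x)"
      using simple_integral_mult[OF g(1)] by simp
    also have "\<dots> = (\<integral>\<^sup>+ x. ennreal a * g x \<partial>M)"
      by (rule nn_integral_eq_simple_integral[symmetric]) (use g(1) in simp)
    also have "\<dots> \<le> (\<integral>\<^sup>+ x. ennreal a * f x \<partial>M)"
      by (rule nn_integral_mono) (use g(2) in \<open>auto simp: le_fun_def intro: mult_left_mono\<close>)
    finally show "ennreal a * integral\<^sup>S M g \<le> (\<integral>\<^sup>+ x. ennreal a * f x \<partial>M)" .
  qed
  finally show ?thesis .
qed

lemma nnI_scale:
  assumes a: "(a::real) > 0"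
  shows "(\<integral>\<^sup>+ x. ennreal a * f x \<partial>M) = ennreal a * integral\<^sup>N M f"
proof (rule antisym)
  show "ennreal a * integral\<^sup>N M f \<le> (\<integral>\<^sup>+ x. ennreal a * f x \<partial>M)" by (rule nnI_ge[OF a])
  have ia: "1 / a > 0" using a by simp
  have one: "ennreal a * ennreal (1 / a) = 1" using a by (simp add: ennreal_mult[symmetric])
  have "ennreal (1 / a) * (\<integral>\<^sup>+ x. ennreal a * f x \<partial>M) \<le> (\<integral>\<^sup>+ x. ennreal (1 / a) * (ennreal a * f x) \<partial>M)"
    by (rule nnI_ge[OF ia])
  also have "\<dots> = integral\<^sup>N M f" by (simp add: mult.assoc[symmetric] mult.commute[of "ennreal (1/a)"] one)
  finally have "ennreal a * (ennreal (1 / a) * (\<integral>\<^sup>+ x. ennreal a * f x \<partial>M)) \<le> ennreal a * integral\<^sup>N M f"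
    by (rule mult_left_mono) simp
  then show "(\<integral>\<^sup>+ x. ennreal a * f x \<partial>M) \<le> ennreal a * integral\<^sup>N M f"
    by (simp add: mult.assoc[symmetric] one)
qed

section \<open>The individual spaces\<close>

definition Zb :: felem where "Zb = (\<lambda>n t. fzero)"

lemma sp_RF:
  assumes c: "c > 0" and y: "y \<in> bcarrier SpRF"
  shows "bscale c y \<in> bcarrier SpRF \<and> bdist SpRF Zb (bscale c y) = c * bdist SpRF Zb y \<and> 0 \<le> bdist SpRF Zb y"
proof -
  obtain u where u: "y = (\<lambda>n t. u)" using y by auto
  have "bscale c y = (\<lambda>n t. fscale c u)" unfolding u bscale_def ..
  then show ?thesis using u fD_fscale0[OF c] fD_nonneg by (auto simp: Zb_def)
qed

lemma sp_C:
  assumes c: "c > 0" and ab: "a < b" and y: "y \<in> bcarrier (SpC a b)"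
  shows "bscale c y \<in> bcarrier (SpC a b) \<and> bdist (SpC a b) Zb (bscale c y) = c * bdist (SpC a b) Zb y \<and> 0 \<le> bdist (SpC a b) Zb y"
proof -
  obtain f where f: "y = ext_on a b f" "fcont_on {a..b} f" using y by auto
  have 1: "bscale c y \<in> bcarrier (SpC a b)"
    using fcont_scale[OF c f(2)] unfolding f(1) ext_scale by auto
  have ne: "{a..b} \<noteq> {}" using ab by simp
  have bd: "bdd_above ((\<lambda>t. fD fzero (f t)) ` {a..b})" by (rule bdd_cont[OF f(2)])
  have d1: "bdist (SpC a b) Zb y = (SUP t\<in>{a..b}. fD fzero (f t))"
    unfolding f(1) Zb_def by (simp add: ext_SUP)
  have "bdist (SpC a b) Zb (bscale c y) = (SUP t\<in>{a..b}. fD fzero (fscale c (f t)))"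
    unfolding f(1) Zb_def ext_scale by (simp add: ext_SUP)
  also have "\<dots> = (SUP t\<in>{a..b}. c * fD fzero (f t))" using fD_fscale0[OF c] by simp
  also have "\<dots> = c * bdist (SpC a b) Zb y" unfolding d1 by (rule sup_img_scale[OF c ne bd])
  finally have 2: "bdist (SpC a b) Zb (bscale c y) = c * bdist (SpC a b) Zb y" .
  have 3: "0 \<le> bdist (SpC a b) Zb y" unfolding d1 by (rule sup_nonneg[OF ne bd fD_nonneg])
  show ?thesis using 1 2 3 by blast
qed

lemma Cp_term:
  assumes ab: "a < b"
  shows "(SUP t\<in>{a..b}. fD (((fhderiv {a..b}) ^^ i) (\<lambda>t. fzero) t) (((fhderiv {a..b}) ^^ i) (ext_on a b g 0) t))
       = (SUP t\<in>{a..b}. fD fzero (((fhderiv {a..b}) ^^ i) g t))"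
proof -
  have e: "\<forall>s\<in>{a..b}. ext_on a b g 0 s = g s" unfolding ext_on_def by simp
  show ?thesis unfolding fhderiv_zero[OF ab]
    by (rule SUP_cong) (use funpow_cong_on[OF e, of i] in auto)
qed

lemma sp_Cp:
  assumes c: "c > 0" and ab: "a < b" and y: "y \<in> bcarrier (SpCp p a b)"
  shows "bscale c y \<in> bcarrier (SpCp p a b) \<and> bdist (SpCp p a b) Zb (bscale c y) = c * bdist (SpCp p a b) Zb y \<and> 0 \<le> bdist (SpCp p a b) Zb y"
proof -
  let ?D = "fhderiv {a..b}"
  obtain f where f: "y = ext_on a b f" "fCp_on p {a..b} f" using y by auto
  have 1: "bscale c y \<in> bcarrier (SpCp p a b)"
    using fCp_scale_on[OF ab c f(2)] unfolding f(1) ext_scale by auto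
  have ne: "{a..b} \<noteq> {}" using ab by simp
  have bd: "bdd_above ((\<lambda>t. fD fzero ((?D ^^ i) f t)) ` {a..b})" if "i \<le> p" for i
    using f(2) that unfolding fCp_on_def by (intro bdd_cont) blast
  have Zb0: "Zb 0 = (\<lambda>t. fzero)" unfolding Zb_def ..
  have d1: "bdist (SpCp p a b) Zb y = (\<Sum>i\<le>p. SUP t\<in>{a..b}. fD fzero ((?D ^^ i) f t))"
    unfolding f(1) bdist.simps Zb0 Cp_term[OF ab] ..
  have "bdist (SpCp p a b) Zb (bscale c y) = (\<Sum>i\<le>p. SUP t\<in>{a..b}. fD fzero ((?D ^^ i) (\<lambda>t. fscale c (f t)) t))"
    unfolding f(1) ext_scale bdist.simps Zb0 Cp_term[OF ab] ..
  also have "\<dots> = (\<Sum>i\<le>p. SUP t\<in>{a..b}. c * fD fzero ((?D ^^ i) f t))"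
  proof (rule sum.cong[OF refl])
    fix i assume "i \<in> {..p}"
    then have "(?D ^^ i) (\<lambda>t. fscale c (f t)) = (\<lambda>t. fscale c ((?D ^^ i) f t))"
      using fCp_scale[OF ab c f(2)] by simp
    then show "(SUP t\<in>{a..b}. fD fzero ((?D ^^ i) (\<lambda>t. fscale c (f t)) t)) = (SUP t\<in>{a..b}. c * fD fzero ((?D ^^ i) f t))"
      using fD_fscale0[OF c] by simp
  qed
  also have "\<dots> = (\<Sum>i\<le>p. c * (SUP t\<in>{a..b}. fD fzero ((?D ^^ i) f t)))"
    by (rule sum.cong[OF refl]) (use sup_img_scale[OF c ne bd] in auto)
  also have "\<dots> = c * bdist (SpCp p a b) Zb y" unfolding d1 by (simp add: sum_distrib_left)
  finally have 2: "bdist (SpCp p a b) Zb (bscale c y) = c * bdist (SpCp p a b) Zb y" .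
  have 3: "0 \<le> bdist (SpCp p a b) Zb y" unfolding d1
    by (rule sum_nonneg) (use sup_nonneg[OF ne bd fD_nonneg] in auto)
  show ?thesis using 1 2 3 by blast
qed

definition IL :: "real \<Rightarrow> real \<Rightarrow> real \<Rightarrow> (real \<Rightarrow> fuzzy) \<Rightarrow> ennreal" where
  "IL p a b f = (\<integral>\<^sup>+ t. indicator {a..b} t * ennreal (fD (f t) fzero powr p) \<partial>lborel)"

lemma IL_scale:
  assumes c: "c > 0"
  shows "IL p a b (\<lambda>t. fscale c (f t)) = ennreal (c powr p) * IL p a b f"
proof -
  have "indicator {a..b} t * ennreal (fD (fscale c (f t)) fzero powr p)
      = ennreal (c powr p) * (indicator {a..b} t * ennreal (fD (f t) fzero powr p))" for t
  proof -
    have "fD (fscale c (f t)) fzero powr p = c powr p * fD (f t) fzero powr p"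
      using c fD_nonneg[of "f t" fzero] by (simp add: fD_fscale0' powr_mult)
    then have "ennreal (fD (fscale c (f t)) fzero powr p) = ennreal (c powr p) * ennreal (fD (f t) fzero powr p)"
      by (simp add: ennreal_mult)
    then show ?thesis by (simp add: ac_simps)
  qed
  then show ?thesis unfolding IL_def using nnI_scale[of "c powr p"] c by simp
qed

lemma bdist_L: "bdist (SpL p a b) Zb (ext_on a b g) = enn2real (IL p a b g) powr (1 / p)"
proof -
  have "indicator {a..b} t * ennreal (fD (Zb 0 t) (ext_on a b g 0 t) powr p)
      = indicator {a..b} t * ennreal (fD (g t) fzero powr p)" for t
    by (cases "t \<in> {a..b}") (auto simp: Zb_def ext_on_def fD_sym)
  then show ?thesis unfolding bdist.simps IL_def by simp
qed

lemma sp_L: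
  assumes c: "c > 0" and ab: "a < b" and p: "1 \<le> p" and y: "y \<in> bcarrier (SpL p a b)"
  shows "bscale c y \<in> bcarrier (SpL p a b) \<and> bdist (SpL p a b) Zb (bscale c y) = c * bdist (SpL p a b) Zb y \<and> 0 \<le> bdist (SpL p a b) Zb y"
proof -
  obtain f where f: "y = ext_on a b f" "fmeasurable_on a b f" "IL p a b f < \<infinity>"
    using y unfolding IL_def by auto
  have m: "fmeasurable_on a b (\<lambda>t. fscale c (f t))"
    unfolding fmeasurable_on_def
  proof
    fix r :: real assume r: "r \<in> {0..1}"
    have e1: "(\<lambda>t. lower (fscale c (f t)) r) = (\<lambda>t. c * lower (f t) r)" using r c by (simp add: lower_fscale)
    have e2: "(\<lambda>t. upper (fscale c (f t)) r) = (\<lambda>t. c * upper (f t) r)" using r c by (simp add: upper_fscale)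
    have "(\<lambda>t. lower (f t) r) \<in> borel_measurable (restrict_space lborel {a..b})"
         "(\<lambda>t. upper (f t) r) \<in> borel_measurable (restrict_space lborel {a..b})"
      using f(2) r unfolding fmeasurable_on_def by auto
    then show "(\<lambda>t. lower (fscale c (f t)) r) \<in> borel_measurable (restrict_space lborel {a..b}) \<and>
               (\<lambda>t. upper (fscale c (f t)) r) \<in> borel_measurable (restrict_space lborel {a..b})"
      unfolding e1 e2 by (auto intro: borel_measurable_times)
  qed
  have fin: "IL p a b (\<lambda>t. fscale c (f t)) < \<infinity>"
    unfolding IL_scale[OF c] using f(3) by (simp add: ennreal_mult_less_top)
  have 1: "bscale c y \<in> bcarrier (SpL p a b)"
    using m fin unfolding f(1) ext_scale IL_def by auto
  have E: "enn2real (IL p a b (\<lambda>t. fscale c (f t))) = c powr p * enn2real (IL p a b f)"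
    unfolding IL_scale[OF c] by (simp add: enn2real_mult)
  have 2: "bdist (SpL p a b) Zb (bscale c y) = c * bdist (SpL p a b) Zb y"
    unfolding f(1) ext_scale bdist_L E using powr_scale[OF c p] by simp
  have 3: "0 \<le> bdist (SpL p a b) Zb y" unfolding f(1) bdist_L by simp
  show ?thesis using 1 2 3 by blast
qed

lemma sp_lp:
  assumes c: "c > 0" and p: "1 \<le> p" and y: "y \<in> bcarrier (Splp p)"
  shows "bscale c y \<in> bcarrier (Splp p) \<and> bdist (Splp p) Zb (bscale c y) = c * bdist (Splp p) Zb y \<and> 0 \<le> bdist (Splp p) Zb y"
proof -
  obtain x where x: "y = (\<lambda>n t. x n)" "summable (\<lambda>n. fD (x n) fzero powr p)" using y by auto
  have sc: "fD (fscale c (x n)) fzero powr p = c powr p * fD (x n) fzero powr p" for n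
    using c fD_nonneg[of "x n" fzero] by (simp add: fD_fscale0' powr_mult)
  have bsy: "bscale c y = (\<lambda>n t. fscale c (x n))" unfolding x(1) bscale_def ..
  have s2: "summable (\<lambda>n. fD (fscale c (x n)) fzero powr p)" unfolding sc by (rule summable_mult[OF x(2)])
  have 1: "bscale c y \<in> bcarrier (Splp p)" unfolding bsy using s2 by auto
  have d: "bdist (Splp p) Zb (\<lambda>n t. g n) = (\<Sum>n. fD (g n) fzero powr p) powr (1 / p)" for g
    unfolding bdist.simps Zb_def by (simp add: fD_sym)
  have E: "(\<Sum>n. fD (fscale c (x n)) fzero powr p) = c powr p * (\<Sum>n. fD (x n) fzero powr p)"
    unfolding sc by (rule suminf_mult[OF x(2)])
  have nn: "0 \<le> (\<Sum>n. fD (x n) fzero powr p)" by (rule suminf_nonneg[OF x(2)]) simp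
  have 2: "bdist (Splp p) Zb (bscale c y) = c * bdist (Splp p) Zb y"
    unfolding bsy unfolding x(1) d E using powr_scale[OF c p nn] .
  have 3: "0 \<le> bdist (Splp p) Zb y" unfolding x(1) d by simp
  show ?thesis using 1 2 3 by blast
qed

lemma seq_common:
  assumes c: "c > 0" and bd: "bdd_above (range (\<lambda>n. fD fzero (x n)))"
  shows "(SUP n. fD fzero (fscale c (x n))) = c * (SUP n. fD fzero (x n)) \<and> 0 \<le> (SUP n. fD fzero (x n))"
proof -
  have "(SUP n. fD fzero (fscale c (x n))) = (SUP n. c * fD fzero (x n))" using fD_fscale0[OF c] by simp
  also have "\<dots> = c * (SUP n. fD fzero (x n))" by (rule sup_img_scale[OF c _ bd]) simp
  finally show ?thesis using sup_nonneg[OF _ bd fD_nonneg] by simp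
qed

lemma sp_m:
  assumes c: "c > 0" and y: "y \<in> bcarrier Spm"
  shows "bscale c y \<in> bcarrier Spm \<and> bdist Spm Zb (bscale c y) = c * bdist Spm Zb y \<and> 0 \<le> bdist Spm Zb y"
proof -
  obtain x B where x: "y = (\<lambda>n t. x n)" "\<forall>n. fD (x n) fzero \<le> B" using y by auto
  have bsy: "bscale c y = (\<lambda>n t. fscale c (x n))" unfolding x(1) bscale_def ..
  have "\<forall>n. fD (fscale c (x n)) fzero \<le> c * B" using x(2) c by (simp add: fD_fscale0')
  then have 1: "bscale c y \<in> bcarrier Spm" unfolding bsy by (auto intro!: exI[of _ "\<lambda>n. fscale c (x n)"])
  have bd: "bdd_above (range (\<lambda>n. fD fzero (x n)))" using x(2) fD_sym by (intro bdd_aboveI2[where M=B]) metis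
  show ?thesis using 1 seq_common[OF c bd] unfolding bsy unfolding x(1) Zb_def by simp
qed

lemma sp_c:
  assumes c: "c > 0" and y: "y \<in> bcarrier Spc"
  shows "bscale c y \<in> bcarrier Spc \<and> bdist Spc Zb (bscale c y) = c * bdist Spc Zb y \<and> 0 \<le> bdist Spc Zb y"
proof -
  obtain x l where x: "y = (\<lambda>n t. x n)" "(\<lambda>n. fD (x n) l) \<longlonglongrightarrow> 0" using y by auto
  have bsy: "bscale c y = (\<lambda>n t. fscale c (x n))" unfolding x(1) bscale_def ..
  have "(\<lambda>n. c * fD (x n) l) \<longlonglongrightarrow> c * 0" by (rule tendsto_mult[OF tendsto_const x(2)])
  then have "(\<lambda>n. fD (fscale c (x n)) (fscale c l)) \<longlonglongrightarrow> 0" using fD_fscale[OF c] by simp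
  then have 1: "bscale c y \<in> bcarrier Spc" unfolding bsy by (auto intro!: exI[of _ "\<lambda>n. fscale c (x n)"])
  obtain M where M: "\<forall>n. fD (x n) l \<le> M"
    using bounded_imp_bdd_above[OF convergent_imp_bounded[OF x(2)]] unfolding bdd_above_def by auto
  have "\<forall>n. fD fzero (x n) \<le> fD fzero l + M"
  proof
    fix n
    have "fD fzero (x n) \<le> fD fzero l + fD l (x n)" by (rule fD_triangle)
    then show "fD fzero (x n) \<le> fD fzero l + M" using M fD_sym[of l "x n"] by (metis add_left_mono order.trans)
  qed
  then have bd: "bdd_above (range (\<lambda>n. fD fzero (x n)))" by (intro bdd_aboveI2[where M="fD fzero l + M"]) blast
  show ?thesis using 1 seq_common[OF c bd] unfolding bsy unfolding x(1) Zb_def by simp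
qed

lemma sp_c0:
  assumes c: "c > 0" and y: "y \<in> bcarrier Spc0"
  shows "bscale c y \<in> bcarrier Spc0 \<and> bdist Spc0 Zb (bscale c y) = c * bdist Spc0 Zb y \<and> 0 \<le> bdist Spc0 Zb y"
proof -
  obtain x where x: "y = (\<lambda>n t. x n)" "(\<lambda>n. fD (x n) fzero) \<longlonglongrightarrow> 0" using y by auto
  have bsy: "bscale c y = (\<lambda>n t. fscale c (x n))" unfolding x(1) bscale_def ..
  have "(\<lambda>n. c * fD (x n) fzero) \<longlonglongrightarrow> c * 0" by (rule tendsto_mult[OF tendsto_const x(2)])
  then have "(\<lambda>n. fD (fscale c (x n)) fzero) \<longlonglongrightarrow> 0" using fD_fscale0'[OF c] by simp
  then have 1: "bscale c y \<in> bcarrier Spc0" unfolding bsy by (auto intro!: exI[of _ "\<lambda>n. fscale c (x n)"])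
  obtain M where M: "\<forall>n. fD (x n) fzero \<le> M"
    using bounded_imp_bdd_above[OF convergent_imp_bounded[OF x(2)]] unfolding bdd_above_def by auto
  then have bd: "bdd_above (range (\<lambda>n. fD fzero (x n)))" using fD_sym by (intro bdd_aboveI2[where M=M]) metis
  show ?thesis using 1 seq_common[OF c bd] unfolding bsy unfolding x(1) Zb_def by simp
qed

lemma sp_all:
  assumes v: "valid_fspace S" and c: "c > 0" and y: "y \<in> bcarrier S"
  shows "bscale c y \<in> bcarrier S \<and> bdist S Zb (bscale c y) = c * bdist S Zb y \<and> 0 \<le> bdist S Zb y"
proof (cases S)
  case SpRF then show ?thesis using sp_RF[OF c] y by simp
next
  case (SpC a b) then show ?thesis using sp_C[OF c] y v by simp
next
  case (SpL p a b) then show ?thesis using sp_L[OF c] y v by simp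
next
  case (SpCp p a b) then show ?thesis using sp_Cp[OF c] y v by simp
next
  case (Splp p) then show ?thesis using sp_lp[OF c] y v by simp
next
  case Spm then show ?thesis using sp_m[OF c] y by simp
next
  case Spc then show ?thesis using sp_c[OF c] y by simp
next
  case Spc0 then show ?thesis using sp_c0[OF c] y by simp
qed

lemma zero_all:
  assumes v: "valid_fspace S"
  shows "Zb \<in> bcarrier S"
proof (cases S)
  case SpRF then show ?thesis unfolding Zb_def by (auto intro!: exI[of _ fzero])
next
  case (SpC a b)
  have "ext_on a b (\<lambda>t. fzero) = Zb" unfolding ext_on_def Zb_def by simp
  moreover have "fcont_on {a..b} (\<lambda>t. fzero)" unfolding fcont_on_def by (auto simp: fD_refl)
  ultimately show ?thesis using SpC by force
next
  case (SpL p a b)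
  have "ext_on a b (\<lambda>t. fzero) = Zb" unfolding ext_on_def Zb_def by simp
  moreover have "fmeasurable_on a b (\<lambda>t. fzero)" unfolding fmeasurable_on_def by simp
  moreover have "(\<integral>\<^sup>+ t. indicator {a..b} t * ennreal (fD fzero fzero powr p) \<partial>lborel) < \<infinity>"
    by (simp add: fD_refl)
  ultimately show ?thesis using SpL by force
next
  case (SpCp p a b)
  then have ab: "a < b" using v by simp
  have "ext_on a b (\<lambda>t. fzero) = Zb" unfolding ext_on_def Zb_def by simp
  moreover have "fCp_on p {a..b} (\<lambda>t. fzero)"
    unfolding fCp_on_def fhderiv_zero[OF ab] fcont_on_def fhdifferentiable_on_def
    using fhderiv_const0 by (auto simp: fD_refl)
  ultimately show ?thesis using SpCp by force
next
  case (Splp p)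
  have "summable (\<lambda>n. fD fzero fzero powr p)" by (simp add: fD_refl)
  then show ?thesis using Splp unfolding Zb_def by (auto intro!: exI[of _ "\<lambda>n. fzero"])
next
  case Spm then show ?thesis unfolding Zb_def by (auto simp: fD_refl intro!: exI[of _ "\<lambda>n. fzero"])
next
  case Spc
  have "(\<lambda>n. fD fzero fzero) \<longlonglongrightarrow> 0" by (simp add: fD_refl)
  then show ?thesis using Spc unfolding Zb_def by (auto intro!: exI[of _ "\<lambda>n. fzero"] exI[of _ fzero])
next
  case Spc0
  have "(\<lambda>n. fD fzero fzero) \<longlonglongrightarrow> 0" by (simp add: fD_refl)
  then show ?thesis using Spc0 unfolding Zb_def by (auto intro!: exI[of _ "\<lambda>n. fzero"])
qed



lemma pscale_comp: "pscale c x i = bscale c (x i)" by (simp add: pscale_def bscale_def)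
lemma pzero_comp: "pzero i = Zb" by (simp add: pzero_def Zb_def)

lemma pcar_scale:
  assumes v: "\<forall>S\<in>set Ss. valid_fspace S" and c: "c > 0" and x: "x \<in> pcarrier Ss"
  shows "pscale c x \<in> pcarrier Ss"
  unfolding pcarrier_def
proof (intro CollectI conjI allI impI)
  fix i assume i: "i < length Ss"
  have "valid_fspace (Ss ! i)" using v i by simp
  moreover have "x i \<in> bcarrier (Ss ! i)" using x i unfolding pcarrier_def by blast
  ultimately show "pscale c x i \<in> bcarrier (Ss ! i)" using sp_all[OF _ c] unfolding pscale_comp by blast
next
  fix i assume i: "length Ss \<le> i"
  then have "x i = (\<lambda>n t. fzero)" using x unfolding pcarrier_def by blast
  then show "pscale c x i = (\<lambda>n t. fzero)" unfolding pscale_comp bscale_def by (simp add: fscale_fzero)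
qed

lemma pnorm_eq: "pnorm Ss x = Max ((\<lambda>i. bdist (Ss ! i) Zb (x i)) ` {..<length Ss})"
proof -
  have "{bdist (Ss ! i) (pzero i) (x i) |i. i < length Ss} = (\<lambda>i. bdist (Ss ! i) Zb (x i)) ` {..<length Ss}"
    unfolding pzero_comp by auto
  then show ?thesis unfolding pnorm_def pdist_def by simp
qed

lemma pnorm_scale:
  assumes v: "\<forall>S\<in>set Ss. valid_fspace S" and ne: "Ss \<noteq> []" and c: "c > 0" and x: "x \<in> pcarrier Ss"
  shows "pnorm Ss (pscale c x) = c * pnorm Ss x"
proof -
  let ?g = "\<lambda>i. bdist (Ss ! i) Zb (x i)"
  have "(\<lambda>i. bdist (Ss ! i) Zb (pscale c x i)) ` {..<length Ss} = (\<lambda>i. c * ?g i) ` {..<length Ss}"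
  proof (rule image_cong[OF refl])
    fix i assume "i \<in> {..<length Ss}"
    then have i: "i < length Ss" by simp
    have "valid_fspace (Ss ! i)" using v i by simp
    moreover have "x i \<in> bcarrier (Ss ! i)" using x i unfolding pcarrier_def by blast
    ultimately show "bdist (Ss ! i) Zb (pscale c x i) = c * ?g i" using sp_all[OF _ c] unfolding pscale_comp by blast
  qed
  also have "\<dots> = (*) c ` (?g ` {..<length Ss})" by (simp add: image_image)
  finally have e: "(\<lambda>i. bdist (Ss ! i) Zb (pscale c x i)) ` {..<length Ss} = (*) c ` (?g ` {..<length Ss})" .
  have m: "mono ((*) c)" using c by (auto simp: mono_def)
  have "c * Max (?g ` {..<length Ss}) = Max ((*) c ` (?g ` {..<length Ss}))"
    by (rule mono_Max_commute[OF m]) (use ne in auto)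
  then show ?thesis unfolding pnorm_eq e by simp
qed

lemma pnorm_nonneg:
  assumes v: "\<forall>S\<in>set Ss. valid_fspace S" and ne: "Ss \<noteq> []" and x: "x \<in> pcarrier Ss"
  shows "0 \<le> pnorm Ss x"
proof -
  let ?g = "\<lambda>i. bdist (Ss ! i) Zb (x i)"
  have i: "0 < length Ss" using ne by simp
  have "valid_fspace (Ss ! 0)" using v i by simp
  moreover have "x 0 \<in> bcarrier (Ss ! 0)" using x i unfolding pcarrier_def by blast
  ultimately have "0 \<le> ?g 0" using sp_all[of "Ss ! 0" 1 "x 0"] by simp
  also have "?g 0 \<le> Max (?g ` {..<length Ss})" by (rule Max_ge) (use i in auto)
  finally show ?thesis unfolding pnorm_eq .
qed

lemma pzero_car:
  assumes v: "\<forall>S\<in>set Ss. valid_fspace S"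
  shows "pzero \<in> pcarrier Ss"
  unfolding pcarrier_def
proof (intro CollectI conjI allI impI)
  fix i assume i: "i < length Ss"
  have "valid_fspace (Ss ! i)" using v i by simp
  then show "pzero i \<in> bcarrier (Ss ! i)" unfolding pzero_comp by (rule zero_all)
next
  fix i show "pzero i = (\<lambda>n t. fzero)" unfolding pzero_def ..
qed

lemma pscale_zero: "pscale 0 x = pzero" unfolding pscale_def pzero_def fscale_def by simp

lemma pscale_pzero: "pscale c pzero = pzero" unfolding pscale_def pzero_def by (simp add: fscale_fzero)

lemma pnorm_zero:
  assumes v: "\<forall>S\<in>set Ss. valid_fspace S" and ne: "Ss \<noteq> []"
  shows "pnorm Ss pzero = 0"
proof -
  have "pnorm Ss pzero = 2 * pnorm Ss pzero"
    using pnorm_scale[OF v ne _ pzero_car[OF v], of 2] pscale_pzero by simp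
  then show ?thesis by simp
qed

lemma abstract:
  fixes N :: "'a set" and nm phi :: "'a \<Rightarrow> real" and sc :: "real \<Rightarrow> 'a \<Rightarrow> 'a"
  assumes z: "z \<in> N" "nm z = 0" "phi z = 0"
    and sc: "\<And>x c. x \<in> N \<Longrightarrow> c > 0 \<Longrightarrow> sc c x \<in> N \<and> nm (sc c x) = c * nm x \<and> phi (sc c x) = c * phi x"
    and nn: "\<And>x. x \<in> N \<Longrightarrow> 0 \<le> nm x" "\<And>x. x \<in> N \<Longrightarrow> 0 \<le> phi x"
    and d: "\<delta> > 0" "\<And>x. x \<in> N \<Longrightarrow> nm x < \<delta> \<Longrightarrow> phi x < 1"
  shows "(\<forall>x\<in>N. phi x \<le> Inf {M. M > 0 \<and> (\<forall>x\<in>N. phi x \<le> M * nm x)} * nm x) \<and>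
         Inf {M. M > 0 \<and> (\<forall>x\<in>N. phi x \<le> M * nm x)} = Sup {phi x | x. x \<in> N \<and> nm x \<le> 1}"
proof -
  define Ms where "Ms = {M. M > 0 \<and> (\<forall>x\<in>N. phi x \<le> M * nm x)}"
  define Ss where "Ss = {phi x | x. x \<in> N \<and> nm x \<le> 1}"
  have zero: "phi x = 0" if x: "x \<in> N" "nm x = 0" for x
  proof (rule ccontr)
    assume "phi x \<noteq> 0"
    then have p: "phi x > 0" using nn(2)[OF x(1)] by simp
    define c where "c = 2 / phi x"
    have c: "c > 0" using p unfolding c_def by simp
    have "nm (sc c x) < \<delta>" using sc[OF x(1) c] x(2) d(1) by simp
    then have "phi (sc c x) < 1" using d(2) sc[OF x(1) c] by blast
    moreover have "phi (sc c x) = 2" using sc[OF x(1) c] p unfolding c_def by simp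
    ultimately show False by simp
  qed
  have bound: "phi x \<le> (2 / \<delta>) * nm x" if x: "x \<in> N" for x
  proof (cases "nm x = 0")
    case True then show ?thesis using zero[OF x] by simp
  next
    case False
    then have n: "nm x > 0" using nn(1)[OF x] by simp
    define c where "c = \<delta> / (2 * nm x)"
    have c: "c > 0" using n d(1) unfolding c_def by simp
    have "nm (sc c x) = \<delta> / 2" using sc[OF x c] n unfolding c_def by simp
    then have "nm (sc c x) < \<delta>" using d(1) by simp
    then have "phi (sc c x) < 1" using d(2) sc[OF x c] by blast
    then have "c * phi x < 1" using sc[OF x c] by simp
    then have "\<delta> * phi x < 2 * nm x" using n unfolding c_def by (simp add: field_simps)
    then show ?thesis using d(1) by (simp add: field_simps)
  qed
  have M0: "2 / \<delta> \<in> Ms" unfolding Ms_def using bound d(1) by simp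
  have Mne: "Ms \<noteq> {}" using M0 by blast
  have Mbb: "bdd_below Ms" unfolding Ms_def by (rule bdd_belowI[where m=0]) simp
  define Nn where "Nn = Inf Ms"
  have Nn0: "0 \<le> Nn" unfolding Nn_def by (rule cInf_greatest[OF Mne]) (simp add: Ms_def)
  have P1: "\<forall>x\<in>N. phi x \<le> Nn * nm x"
  proof
    fix x assume x: "x \<in> N"
    show "phi x \<le> Nn * nm x"
    proof (cases "nm x = 0")
      case True then show ?thesis using zero[OF x] by simp
    next
      case False
      then have n: "nm x > 0" using nn(1)[OF x] by simp
      have "phi x / nm x \<le> Nn" unfolding Nn_def
      proof (rule cInf_greatest[OF Mne])
        fix M assume "M \<in> Ms"
        then have "phi x \<le> M * nm x" using x unfolding Ms_def by blast
        then show "phi x / nm x \<le> M" using n by (simp add: divide_le_eq)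
      qed
      then show ?thesis using n by (simp add: divide_le_eq)
    qed
  qed
  have Sne: "Ss \<noteq> {}" unfolding Ss_def using z by auto
  have Sbd: "\<forall>s\<in>Ss. s \<le> Nn"
  proof
    fix s assume "s \<in> Ss"
    then obtain x where x: "x \<in> N" "nm x \<le> 1" "s = phi x" unfolding Ss_def by blast
    have "phi x \<le> Nn * nm x" using P1 x(1) by blast
    also have "\<dots> \<le> Nn * 1" using x(2) Nn0 by (intro mult_left_mono) auto
    finally show "s \<le> Nn" using x(3) by simp
  qed
  have bS: "bdd_above Ss" using Sbd by (intro bdd_aboveI[where M=Nn]) blast
  have le1: "Sup Ss \<le> Nn" using Sbd by (intro cSup_least[OF Sne]) blast
  define s where "s = Sup Ss"
  have s0: "0 \<le> s"
  proof -
    have "phi z \<in> Ss" unfolding Ss_def using z by auto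
    then have "phi z \<le> s" unfolding s_def using bS by (intro cSup_upper)
    then show ?thesis using z(3) by simp
  qed
  have inM: "M \<in> Ms" if M: "M > s" for M
    unfolding Ms_def
  proof (intro CollectI conjI ballI)
    show "M > 0" using M s0 by simp
    fix x assume x: "x \<in> N"
    show "phi x \<le> M * nm x"
    proof (cases "nm x = 0")
      case True then show ?thesis using zero[OF x] by simp
    next
      case False
      then have n: "nm x > 0" using nn(1)[OF x] by simp
      have c: "1 / nm x > 0" using n by simp
      have y: "sc (1 / nm x) x \<in> N" "nm (sc (1 / nm x) x) = 1" "phi (sc (1 / nm x) x) = phi x / nm x"
        using sc[OF x c] n by auto
      then have "phi x / nm x \<in> Ss" unfolding Ss_def by force
      then have "phi x / nm x \<le> s" unfolding s_def using bS by (intro cSup_upper)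
      then have "phi x / nm x \<le> M" using M by simp
      then show ?thesis using n by (simp add: divide_le_eq)
    qed
  qed
  have le2: "Nn \<le> s"
  proof (rule ccontr)
    assume "\<not> Nn \<le> s"
    then have "s < (Nn + s) / 2" by simp
    then have "(Nn + s) / 2 \<in> Ms" by (rule inM)
    then have "Nn \<le> (Nn + s) / 2" unfolding Nn_def by (rule cInf_lower[OF _ Mbb])
    then show False using \<open>\<not> Nn \<le> s\<close> by simp
  qed
  show ?thesis using P1 le1 le2 unfolding Nn_def s_def Ms_def Ss_def by simp
qed

theorem theorem3p3:
  fixes Ss :: "fspace list"
  assumes "Ss \<noteq> []" and "\<forall>S\<in>set Ss. valid_fspace S"
  shows "(\<forall>A :: pelem \<Rightarrow> real.
            lin_functional Ss A \<and> cont_at_zero_functional Ss A \<longrightarrow>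
              (\<forall>x\<in>pcarrier Ss. \<bar>A x\<bar> \<le> opnorm_functional Ss A * pnorm Ss x) \<and>
              opnorm_functional Ss A = Sup {\<bar>A x\<bar> | x. x \<in> pcarrier Ss \<and> pnorm Ss x \<le> 1})
       \<and> (\<forall>A :: pelem \<Rightarrow> pelem.
            lin_operator Ss A \<and> cont_at_zero_operator Ss A \<longrightarrow>
              (\<forall>x\<in>pcarrier Ss. pnorm Ss (A x) \<le> opnorm_operator Ss A * pnorm Ss x) \<and>
              opnorm_operator Ss A = Sup {pnorm Ss (A x) | x. x \<in> pcarrier Ss \<and> pnorm Ss x \<le> 1})"
proof (intro conjI allI impI; elim conjE)
  note ne = assms(1) and v = assms(2)
  have zc: "pzero \<in> pcarrier Ss" by (rule pzero_car[OF v])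
  have nz: "pnorm Ss pzero = 0" by (rule pnorm_zero[OF v ne])
  {
    fix A :: "pelem \<Rightarrow> real"
    assume lin: "lin_functional Ss A" and ct: "cont_at_zero_functional Ss A"
    have A0: "A pzero = 0"
    proof -
      have "A (pscale 0 pzero) = 0 * A pzero" using lin zc unfolding lin_functional_def by blast
      then show ?thesis unfolding pscale_zero by simp
    qed
    obtain \<delta> where d: "\<delta> > 0" "\<forall>x\<in>pcarrier Ss. pdist Ss pzero x < \<delta> \<longrightarrow> \<bar>A x - A pzero\<bar> < 1"
      using ct unfolding cont_at_zero_functional_def by (meson zero_less_one)
    have R: "(\<forall>x\<in>pcarrier Ss. (\<lambda>x. \<bar>A x\<bar>) x \<le> Inf {M. M > 0 \<and> (\<forall>x\<in>pcarrier Ss. (\<lambda>x. \<bar>A x\<bar>) x \<le> M * pnorm Ss x)} * pnorm Ss x) \<and>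
         Inf {M. M > 0 \<and> (\<forall>x\<in>pcarrier Ss. (\<lambda>x. \<bar>A x\<bar>) x \<le> M * pnorm Ss x)} = Sup {(\<lambda>x. \<bar>A x\<bar>) x | x. x \<in> pcarrier Ss \<and> pnorm Ss x \<le> 1}"
    proof (rule abstract[where z=pzero and sc=pscale and \<delta>=\<delta>])
      show "pzero \<in> pcarrier Ss" "pnorm Ss pzero = 0" "\<bar>A pzero\<bar> = 0" using zc nz A0 by auto
      fix x c assume x: "x \<in> pcarrier Ss" and c: "(c::real) > 0"
      have "A (pscale c x) = c * A x" using lin x unfolding lin_functional_def by blast
      then show "pscale c x \<in> pcarrier Ss \<and> pnorm Ss (pscale c x) = c * pnorm Ss x \<and> \<bar>A (pscale c x)\<bar> = c * \<bar>A x\<bar>"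
        using pcar_scale[OF v c x] pnorm_scale[OF v ne c x] c by (simp add: abs_mult)
    next
      fix x assume x: "x \<in> pcarrier Ss"
      show "0 \<le> pnorm Ss x" by (rule pnorm_nonneg[OF v ne x])
      show "0 \<le> \<bar>A x\<bar>" by simp
      assume "pnorm Ss x < \<delta>"
      then show "\<bar>A x\<bar> < 1" using d(2) x A0 unfolding pnorm_def by auto
    qed (rule d(1))
    then show "\<forall>x\<in>pcarrier Ss. \<bar>A x\<bar> \<le> opnorm_functional Ss A * pnorm Ss x"
      "opnorm_functional Ss A = Sup {\<bar>A x\<bar> | x. x \<in> pcarrier Ss \<and> pnorm Ss x \<le> 1}"
      unfolding opnorm_functional_def by (blast, blast)
  }
  {
    fix A :: "pelem \<Rightarrow> pelem"
    assume lin: "lin_operator Ss A" and ct: "cont_at_zero_operator Ss A"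
    have AN: "A x \<in> pcarrier Ss" if "x \<in> pcarrier Ss" for x using lin that unfolding lin_operator_def by blast
    have A0: "A pzero = pzero"
    proof -
      have "A (pscale 0 pzero) = pscale 0 (A pzero)" using lin zc unfolding lin_operator_def by blast
      then show ?thesis unfolding pscale_zero by simp
    qed
    obtain \<delta> where d: "\<delta> > 0" "\<forall>x\<in>pcarrier Ss. pdist Ss pzero x < \<delta> \<longrightarrow> pdist Ss (A pzero) (A x) < 1"
      using ct unfolding cont_at_zero_operator_def by (meson zero_less_one)
    have R: "(\<forall>x\<in>pcarrier Ss. (\<lambda>x. pnorm Ss (A x)) x \<le> Inf {M. M > 0 \<and> (\<forall>x\<in>pcarrier Ss. (\<lambda>x. pnorm Ss (A x)) x \<le> M * pnorm Ss x)} * pnorm Ss x) \<and>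
         Inf {M. M > 0 \<and> (\<forall>x\<in>pcarrier Ss. (\<lambda>x. pnorm Ss (A x)) x \<le> M * pnorm Ss x)} = Sup {(\<lambda>x. pnorm Ss (A x)) x | x. x \<in> pcarrier Ss \<and> pnorm Ss x \<le> 1}"
    proof (rule abstract[where z=pzero and sc=pscale and \<delta>=\<delta>])
      show "pzero \<in> pcarrier Ss" "pnorm Ss pzero = 0" "pnorm Ss (A pzero) = 0" using zc nz A0 by auto
      fix x c assume x: "x \<in> pcarrier Ss" and c: "(c::real) > 0"
      have "A (pscale c x) = pscale c (A x)" using lin x unfolding lin_operator_def by blast
      then show "pscale c x \<in> pcarrier Ss \<and> pnorm Ss (pscale c x) = c * pnorm Ss x \<and> pnorm Ss (A (pscale c x)) = c * pnorm Ss (A x)"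
        using pcar_scale[OF v c x] pnorm_scale[OF v ne c x] pnorm_scale[OF v ne c AN[OF x]] by simp
    next
      fix x assume x: "x \<in> pcarrier Ss"
      show "0 \<le> pnorm Ss x" by (rule pnorm_nonneg[OF v ne x])
      show "0 \<le> pnorm Ss (A x)" by (rule pnorm_nonneg[OF v ne AN[OF x]])
      assume "pnorm Ss x < \<delta>"
      then show "pnorm Ss (A x) < 1" using d(2) x A0 unfolding pnorm_def by auto
    qed (rule d(1))
    then show "\<forall>x\<in>pcarrier Ss. pnorm Ss (A x) \<le> opnorm_operator Ss A * pnorm Ss x"
      "opnorm_operator Ss A = Sup {pnorm Ss (A x) | x. x \<in> pcarrier Ss \<and> pnorm Ss x \<le> 1}"
      unfolding opnorm_operator_def by (blast, blast)
  }
qed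

end
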